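(* Let $\Sigma$ be a free boundary solution in the unit ball $B^3$ (a two-dimensional surface with unit normal $\nu=(\nu_1,\nu_2,\nu_3)$) which is not a plane disk. Then the linear span $\mathcal{C}$ of the functions $\nu_1,\nu_2,\nu_3,\ x\cdot\nu$ on $\Sigma$ is four-dimensional, where $x$ is the position vector.
   Context: A free boundary solution in $B^3$ is a minimal surface properly immersed in $B^3$ whose outward unit conormal along $\partial\Sigma$ agrees with the outward unit normal of $\partial B^3$. *)

theory Defs
  imports "HOL-Analysis.Analysis" "HOL-Analysis.Cross3" "HOL-Library.Function_Algebras"
begin

text \<open>Local coordinates (u,v) live in real \<times> real; the closed upper half plane
  models boundary charts (interior of the surface corresponds to v > 0).\<close>

definition halfplane :: "(real \<times> real) set" where
  "halfplane = {w. snd w \<ge> 0}"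

definition pdir :: "bool \<Rightarrow> real \<times> real" where
  "pdir d = (if d then (0, 1) else (1, 0))"

fun iterpd :: "bool list \<Rightarrow> (real \<times> real \<Rightarrow> 'b::real_normed_vector) \<Rightarrow> real \<times> real \<Rightarrow> 'b" where
  "iterpd [] f = f"
| "iterpd (d # ds) f = (\<lambda>x. vector_derivative (\<lambda>t. iterpd ds f (x + t *\<^sub>R pdir d)) (at 0))"

definition smooth_on :: "(real \<times> real) set \<Rightarrow> (real \<times> real \<Rightarrow> 'b::real_normed_vector) \<Rightarrow> bool" where
  "smooth_on W f \<longleftrightarrow>
     (\<forall>ds. continuous_on W (iterpd ds f) \<and>
       (\<forall>x\<in>W. \<forall>d. ((\<lambda>t. iterpd ds f (x + t *\<^sub>R pdir d))
                      has_vector_derivative iterpd (d # ds) f x) (at 0)))"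

abbreviation Du :: "(real \<times> real \<Rightarrow> real^3) \<Rightarrow> real \<times> real \<Rightarrow> real^3" where
  "Du F \<equiv> iterpd [False] F"
abbreviation Dv :: "(real \<times> real \<Rightarrow> real^3) \<Rightarrow> real \<times> real \<Rightarrow> real^3" where
  "Dv F \<equiv> iterpd [True] F"

definition mean_curvature :: "(real \<times> real \<Rightarrow> real^3) \<Rightarrow> real \<times> real \<Rightarrow> real" where
  "mean_curvature F w =
     (let Fu = Du F w; Fv = Dv F w;
          n = (1 / norm (cross3 Fu Fv)) *\<^sub>R (cross3 Fu Fv);
          E = Fu \<bullet> Fu; Fm = Fu \<bullet> Fv; G = Fv \<bullet> Fv;
          L = iterpd [False, False] F w \<bullet> n;
          Mm = iterpd [False, True] F w \<bullet> n;
          N = iterpd [True, True] F w \<bullet> n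
      in (E * N - 2 * Fm * Mm + G * L) / (2 * (E * G - Fm\<^sup>2)))"

text \<open>Outward unit conormal at a boundary point (v = 0) of a chart: the unit tangent
  vector orthogonal to the boundary curve, pointing away from the surface (v < 0).\<close>
definition outward_conormal :: "(real \<times> real \<Rightarrow> real^3) \<Rightarrow> real \<times> real \<Rightarrow> real^3" where
  "outward_conormal F w =
     (let t = Du F w; q = Dv F w - ((Dv F w \<bullet> t) / (t \<bullet> t)) *\<^sub>R t
      in - ((1 / norm q) *\<^sub>R q))"

text \<open>A local parametrization around p of the abstract surface M (a topological space)
  along which the map X : M \<rightarrow> R^3 is a smooth immersion: psi maps W \<inter> halfplane
  homeomorphically onto an open subset of M containing p, and X \<circ> psi agrees there with
  a smooth immersion F defined on the open set W.\<close>
definition local_param ::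
  "'a::topological_space set \<Rightarrow> ('a \<Rightarrow> real^3) \<Rightarrow> 'a \<Rightarrow> (real \<times> real) set
     \<Rightarrow> (real \<times> real \<Rightarrow> 'a) \<Rightarrow> (real \<times> real \<Rightarrow> real^3) \<Rightarrow> bool" where
  "local_param M X p W \<psi> F \<longleftrightarrow>
     open W \<and> p \<in> \<psi> ` (W \<inter> halfplane) \<and>
     (\<exists>g. homeomorphism (W \<inter> halfplane) (\<psi> ` (W \<inter> halfplane)) \<psi> g) \<and>
     openin (top_of_set M) (\<psi> ` (W \<inter> halfplane)) \<and>
     smooth_on W F \<and>
     (\<forall>w\<in>W \<inter> halfplane. X (\<psi> w) = F w) \<and>
     (\<forall>w\<in>W. cross3 (Du F w) (Dv F w) \<noteq> 0)"

definition immersed_surface :: "'a::t2_space set \<Rightarrow> ('a \<Rightarrow> real^3) \<Rightarrow> bool" where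
  "immersed_surface M X \<longleftrightarrow>
     M \<noteq> {} \<and> compact M \<and> connected M \<and>
     (\<forall>p\<in>M. \<exists>W \<psi> F. local_param M X p W \<psi> F)"

definition surface_boundary :: "'a::topological_space set \<Rightarrow> ('a \<Rightarrow> real^3) \<Rightarrow> 'a set" where
  "surface_boundary M X =
     {p\<in>M. \<exists>W \<psi> F w. local_param M X p W \<psi> F \<and> w \<in> W \<and> snd w = 0 \<and> \<psi> w = p}"

definition unit_normal :: "'a::topological_space set \<Rightarrow> ('a \<Rightarrow> real^3) \<Rightarrow> ('a \<Rightarrow> real^3) \<Rightarrow> bool" where
  "unit_normal M X \<nu> \<longleftrightarrow>
     continuous_on M \<nu> \<and> (\<forall>p\<in>M. norm (\<nu> p) = 1) \<and>
     (\<forall>p W \<psi> F. local_param M X p W \<psi> F \<longrightarrow>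
        (\<forall>w\<in>W \<inter> halfplane. \<nu> (\<psi> w) \<bullet> Du F w = 0 \<and> \<nu> (\<psi> w) \<bullet> Dv F w = 0))"

definition minimal_surface :: "'a::topological_space set \<Rightarrow> ('a \<Rightarrow> real^3) \<Rightarrow> bool" where
  "minimal_surface M X \<longleftrightarrow>
     (\<forall>p W \<psi> F. local_param M X p W \<psi> F \<longrightarrow> (\<forall>w\<in>W \<inter> halfplane. mean_curvature F w = 0))"

text \<open>Free boundary solution in the closed unit ball B^3: minimal, properly immersed
  (X(M) \<subseteq> B^3 and X(p) \<in> \<partial>B^3 iff p \<in> \<partial>M), and the outward unit conormal along the
  boundary equals the outward unit normal X(p) of the sphere.\<close>
definition free_boundary_solution :: "'a::t2_space set \<Rightarrow> ('a \<Rightarrow> real^3) \<Rightarrow> bool" where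
  "free_boundary_solution M X \<longleftrightarrow>
     immersed_surface M X \<and> minimal_surface M X \<and>
     (\<forall>p\<in>M. norm (X p) \<le> 1) \<and>
     (\<forall>p\<in>M. norm (X p) = 1 \<longleftrightarrow> p \<in> surface_boundary M X) \<and>
     (\<forall>p W \<psi> F w. local_param M X p W \<psi> F \<and> w \<in> W \<and> snd w = 0 \<longrightarrow>
        outward_conormal F w = X (\<psi> w))"

definition plane_disk :: "'a set \<Rightarrow> ('a \<Rightarrow> real^3) \<Rightarrow> bool" where
  "plane_disk M X \<longleftrightarrow> (\<exists>a c. a \<noteq> 0 \<and> X ` M = {x. norm x \<le> 1 \<and> a \<bullet> x = c})"

text \<open>Real-valued functions on M, represented by extension by zero outside M.\<close>
definition fun_on :: "'a set \<Rightarrow> ('a \<Rightarrow> real) \<Rightarrow> 'a \<Rightarrow> real" where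
  "fun_on M f = (\<lambda>p. if p \<in> M then f p else 0)"

end

theory Submission
  imports Defs
begin

lemma smooth_dir:
  assumes "smooth_on W f" "x \<in> W"
  shows "((\<lambda>t. iterpd ds f (x + t *\<^sub>R pdir d)) has_vector_derivative iterpd (d # ds) f x) (at 0)"
  using assms unfolding smooth_on_def by blast

lemma smooth_cont:
  assumes "smooth_on W f"
  shows "continuous_on W (iterpd ds f)"
  using assms unfolding smooth_on_def by blast

lemma smooth_dir_u:
  assumes "smooth_on W f" "(x,y) \<in> W"
  shows "((\<lambda>x'. iterpd ds f (x', y)) has_vector_derivative iterpd (False # ds) f (x,y)) (at x)"
proof -
  have 1: "((\<lambda>t. iterpd ds f ((x,y) + t *\<^sub>R pdir False)) has_vector_derivative iterpd (False # ds) f (x,y)) (at 0)"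
    by (rule smooth_dir[OF assms])
  have 2: "((\<lambda>x'::real. x' - x) has_vector_derivative 1) (at x)"
    by (auto intro!: derivative_eq_intros)
  have "(((\<lambda>t. iterpd ds f ((x,y) + t *\<^sub>R pdir False)) \<circ> (\<lambda>x'. x' - x)) has_vector_derivative (1 *\<^sub>R iterpd (False # ds) f (x,y))) (at x)"
    using vector_diff_chain_at[OF 2] 1 by simp
  moreover have "((\<lambda>t. iterpd ds f ((x,y) + t *\<^sub>R pdir False)) \<circ> (\<lambda>x'. x' - x)) = (\<lambda>x'. iterpd ds f (x', y))"
    by (auto simp: pdir_def o_def)
  ultimately show ?thesis by simp
qed

lemma smooth_dir_v:
  assumes "smooth_on W f" "(x,y) \<in> W"
  shows "((\<lambda>y'. iterpd ds f (x, y')) has_vector_derivative iterpd (True # ds) f (x,y)) (at y)"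
proof -
  have 1: "((\<lambda>t. iterpd ds f ((x,y) + t *\<^sub>R pdir True)) has_vector_derivative iterpd (True # ds) f (x,y)) (at 0)"
    by (rule smooth_dir[OF assms])
  have 2: "((\<lambda>y'::real. y' - y) has_vector_derivative 1) (at y)"
    by (auto intro!: derivative_eq_intros)
  have "(((\<lambda>t. iterpd ds f ((x,y) + t *\<^sub>R pdir True)) \<circ> (\<lambda>y'. y' - y)) has_vector_derivative (1 *\<^sub>R iterpd (True # ds) f (x,y))) (at y)"
    using vector_diff_chain_at[OF 2] 1 by simp
  moreover have "((\<lambda>t. iterpd ds f ((x,y) + t *\<^sub>R pdir True)) \<circ> (\<lambda>y'. y' - y)) = (\<lambda>y'. iterpd ds f (x, y'))"
    by (auto simp: pdir_def o_def)
  ultimately show ?thesis by simp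
qed

lemma open_box_in:
  assumes "open W" "(x::real,y::real) \<in> W"
  obtains e where "e > 0" "ball x e \<times> ball y e \<subseteq> W"
proof -
  obtain r where r: "r > 0" "ball (x,y) r \<subseteq> W" using assms open_contains_ball by blast
  have "ball x (r/2) \<times> ball y (r/2) \<subseteq> ball (x,y) r"
  proof
    fix z assume z: "z \<in> ball x (r/2) \<times> ball y (r/2)"
    obtain a b where zab: "z = (a,b)" by force
    have "dist a x < r/2" "dist b y < r/2" using z zab by (auto simp: dist_commute)
    then have "dist (a,b) (x,y) \<le> dist a x + dist b y"
      by (simp add: dist_Pair_Pair sqrt_sum_squares_le_sum)
    then show "z \<in> ball (x,y) r" using \<open>dist a x < r/2\<close> \<open>dist b y < r/2\<close> zab by (auto simp: dist_commute)
  qed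
  then show ?thesis using that[of "r/2"] r by auto
qed

lemma iterpd_frechet:
  assumes "smooth_on W f" "open W" "w \<in> W"
  shows "(iterpd ds f has_derivative
           (\<lambda>h. fst h *\<^sub>R iterpd (False#ds) f w + snd h *\<^sub>R iterpd (True#ds) f w)) (at w)"
proof -
  obtain x y where w: "w = (x,y)" by force
  obtain e where e: "e > 0" "ball x e \<times> ball y e \<subseteq> W" using open_box_in assms w by metis
  let ?g = "\<lambda>a b. iterpd ds f (a,b)"
  have fx: "((\<lambda>a. ?g a y) has_derivative (\<lambda>h. h *\<^sub>R iterpd (False#ds) f (x,y))) (at x within ball x e)"
    using smooth_dir_u[OF assms(1), of x y ds] assms w
    by (simp add: has_vector_derivative_def has_derivative_at_withinI)
  have fy: "((\<lambda>b. ?g a b) has_derivative blinfun_apply (blinfun_scaleR_left (iterpd (True#ds) f (a,b)))) (at b within ball y e)"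
    if "a \<in> ball x e" "b \<in> ball y e" for a b
  proof -
    have "(a,b) \<in> W" using e that by auto
    from smooth_dir_v[OF assms(1) this, of ds] show ?thesis
      by (auto simp: has_vector_derivative_def intro: has_derivative_at_withinI)
  qed
  have cont: "continuous (at (x,y) within ball x e \<times> ball y e) (\<lambda>(a,b). blinfun_scaleR_left (iterpd (True#ds) f (a,b)))"
  proof -
    have "continuous_on W (iterpd (True#ds) f)" by (rule smooth_cont[OF assms(1)])
    then have "isCont (iterpd (True#ds) f) (x,y)" using assms w continuous_on_eq_continuous_at by blast
    then have "isCont (\<lambda>z. blinfun_scaleR_left (iterpd (True#ds) f z)) (x,y)"
      by (intro continuous_intros) auto
    then show ?thesis
      by (simp add: case_prod_beta' continuous_at_imp_continuous_within)
  qed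
  have "((\<lambda>(a,b). ?g a b) has_derivative (\<lambda>(tx, ty). tx *\<^sub>R iterpd (False#ds) f (x,y) + blinfun_scaleR_left (iterpd (True#ds) f (x,y)) ty)) (at (x,y) within ball x e \<times> ball y e)"
    by (rule has_derivative_partialsI[OF fx fy cont]) (use e in auto)
  then have "(iterpd ds f has_derivative (\<lambda>(tx, ty). tx *\<^sub>R iterpd (False#ds) f (x,y) + ty *\<^sub>R iterpd (True#ds) f (x,y))) (at (x,y) within ball x e \<times> ball y e)"
    by simp
  then have "(iterpd ds f has_derivative (\<lambda>(tx, ty). tx *\<^sub>R iterpd (False#ds) f (x,y) + ty *\<^sub>R iterpd (True#ds) f (x,y))) (at (x,y))"
    using e by (subst (asm) at_within_open) (auto simp: open_Times)
  then show ?thesis using w by (simp add: case_prod_beta')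
qed



lemma mvt_vec:
  fixes f :: "real \<Rightarrow> 'b::real_normed_vector"
  assumes "a \<le> b" "\<And>x. x\<in>{a..b} \<Longrightarrow> (f has_vector_derivative f' x) (at x)"
    "\<And>x. x\<in>{a..b} \<Longrightarrow> norm (f' x) \<le> B"
  shows "norm (f b - f a) \<le> B * (b - a)"
proof -
  have "norm (f b - f a) \<le> B * norm (b - a)"
  proof (rule differentiable_bound[of "{a..b}" f "\<lambda>x h. h *\<^sub>R f' x"])
    show "convex {a..b}" by simp
    show "(f has_derivative (\<lambda>h. h *\<^sub>R f' x)) (at x within {a..b})" if "x \<in> {a..b}" for x
      using assms(2)[OF that] by (simp add: has_vector_derivative_def has_derivative_at_withinI)
    show "onorm (\<lambda>h. h *\<^sub>R f' x) \<le> B" if "x \<in> {a..b}" for x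
    proof -
      have "onorm (\<lambda>h::real. h *\<^sub>R f' x) = norm (f' x)"
        using onorm_scaleR_left[OF bounded_linear_ident, of "f' x"] onorm_id[where 'a=real] by simp
      then show ?thesis using assms(3)[OF that] by simp
    qed
  qed (use assms in auto)
  then show ?thesis using assms(1) by simp
qed

lemma delta_est:
  fixes g gu guv :: "real \<times> real \<Rightarrow> 'b::real_normed_vector"
  assumes hk: "h \<ge> 0" "k \<ge> 0"
    and box: "\<And>a b. a\<in>{x..x+h} \<Longrightarrow> b\<in>{y..y+k} \<Longrightarrow>
        ((\<lambda>a'. g(a',b)) has_vector_derivative gu(a,b)) (at a) \<and>
        ((\<lambda>b'. gu(a,b')) has_vector_derivative guv(a,b)) (at b) \<and> norm (guv(a,b) - A) \<le> \<epsilon>"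
  shows "norm (g(x+h,y+k) - g(x+h,y) - g(x,y+k) + g(x,y) - (h*k) *\<^sub>R A) \<le> \<epsilon>*h*k"
proof -
  define \<phi> where "\<phi> a = g(a,y+k) - g(a,y) - (a*k) *\<^sub>R A" for a
  have yb: "y \<in> {y..y+k}" "y+k \<in> {y..y+k}" using hk by auto
  have d\<phi>: "(\<phi> has_vector_derivative (gu(a,y+k) - gu(a,y) - k *\<^sub>R A)) (at a)" if "a \<in> {x..x+h}" for a
  proof -
    have 1: "((\<lambda>a'. g(a',y+k)) has_vector_derivative gu(a,y+k)) (at a)" using box[OF that yb(2)] by blast
    have 2: "((\<lambda>a'. g(a',y)) has_vector_derivative gu(a,y)) (at a)" using box[OF that yb(1)] by blast
    have 3: "((\<lambda>a'. (a'*k) *\<^sub>R A) has_vector_derivative k *\<^sub>R A) (at a)"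
      by (auto intro!: derivative_eq_intros)
    show ?thesis unfolding \<phi>_def using has_vector_derivative_diff[OF has_vector_derivative_diff[OF 1 2] 3] .
  qed
  have b\<phi>: "norm (gu(a,y+k) - gu(a,y) - k *\<^sub>R A) \<le> \<epsilon> * k" if a: "a \<in> {x..x+h}" for a
  proof -
    define \<psi> where "\<psi> b = gu(a,b) - b *\<^sub>R A" for b
    have "norm (\<psi> (y+k) - \<psi> y) \<le> \<epsilon> * ((y+k) - y)"
    proof (rule mvt_vec[where f'="\<lambda>b. guv(a,b) - A"])
      show "(\<psi> has_vector_derivative guv (a, b) - A) (at b)" if "b \<in> {y..y+k}" for b
      proof -
        have 1: "((\<lambda>b'. gu(a,b')) has_vector_derivative guv(a,b)) (at b)" using box[OF a that] by blast
        have 2: "((\<lambda>b'. b' *\<^sub>R A) has_vector_derivative A) (at b)"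
          by (auto intro!: derivative_eq_intros)
        show ?thesis unfolding \<psi>_def using has_vector_derivative_diff[OF 1 2] .
      qed
      show "norm (guv (a, b) - A) \<le> \<epsilon>" if "b \<in> {y..y+k}" for b using box[OF a that] by blast
    qed (use hk in auto)
    moreover have "\<psi> (y+k) - \<psi> y = gu(a,y+k) - gu(a,y) - k *\<^sub>R A"
      unfolding \<psi>_def by (simp add: algebra_simps)
    ultimately show ?thesis by simp
  qed
  have "norm (\<phi> (x+h) - \<phi> x) \<le> (\<epsilon> * k) * ((x+h) - x)"
    by (rule mvt_vec[OF _ d\<phi> b\<phi>]) (use hk in auto)
  moreover have "\<phi> (x+h) - \<phi> x = g(x+h,y+k) - g(x+h,y) - g(x,y+k) + g(x,y) - (h*k) *\<^sub>R A"
    unfolding \<phi>_def by (simp add: algebra_simps)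
  ultimately show ?thesis by (simp add: mult_ac)
qed



lemma schwarz:
  assumes sm: "smooth_on W F" and "open W" "w \<in> W"
  shows "iterpd [True,False] F w = iterpd [False,True] F w"
proof (rule ccontr)
  assume ne: "iterpd [True,False] F w \<noteq> iterpd [False,True] F w"
  define A where "A = iterpd [True,False] F w"
  define B where "B = iterpd [False,True] F w"
  define \<epsilon> where "\<epsilon> = norm (A - B) / 4"
  have "\<epsilon> > 0" using ne by (simp add: \<epsilon>_def A_def B_def)
  obtain x y where w: "w = (x,y)" by force
  obtain e where e: "e > 0" "ball x e \<times> ball y e \<subseteq> W" using open_box_in assms w by metis
  obtain d1 where d1: "d1 > 0" "\<And>z. z \<in> W \<Longrightarrow> dist z w < d1 \<Longrightarrow> dist (iterpd [True,False] F z) A < \<epsilon>"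
    using smooth_cont[OF sm, of "[True,False]"] \<open>\<epsilon> > 0\<close> assms(3) unfolding continuous_on_iff A_def by metis
  obtain d2 where d2: "d2 > 0" "\<And>z. z \<in> W \<Longrightarrow> dist z w < d2 \<Longrightarrow> dist (iterpd [False,True] F z) B < \<epsilon>"
    using smooth_cont[OF sm, of "[False,True]"] \<open>\<epsilon> > 0\<close> assms(3) unfolding continuous_on_iff B_def by metis
  define s where "s = min e (min d1 d2) / 3"
  have s: "s > 0" "s < e" "2 * s < d1" "2 * s < d2" using e d1 d2 by (auto simp: s_def)
  have inW: "(a,b) \<in> W" and near: "dist (a,b) w \<le> 2 * s"
    if "a \<in> {x..x+s}" "b \<in> {y..y+s}" for a b
  proof -
    have "dist a x \<le> s" "dist b y \<le> s" using that by (auto simp: dist_real_def)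
    then show "(a,b) \<in> W" using e s by (auto simp: dist_commute)
    have "dist (a,b) (x,y) \<le> dist a x + dist b y"
      by (simp add: dist_Pair_Pair sqrt_sum_squares_le_sum)
    also have "\<dots> \<le> 2 * s" using \<open>dist a x \<le> s\<close> \<open>dist b y \<le> s\<close> by simp
    finally show "dist (a,b) w \<le> 2 * s" using w by simp
  qed
  define Dl where "Dl = F(x+s,y+s) - F(x+s,y) - F(x,y+s) + F(x,y)"
  have est1: "norm (Dl - (s * s) *\<^sub>R A) \<le> \<epsilon> * s * s"
    unfolding Dl_def
  proof (rule delta_est[where gu="iterpd [False] F" and guv="iterpd [True,False] F"])
    fix a b assume ab: "a \<in> {x..x+s}" "b \<in> {y..y+s}"
    have "((\<lambda>a'. iterpd [] F (a',b)) has_vector_derivative iterpd [False] F (a,b)) (at a)"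
      by (rule smooth_dir_u[OF sm inW[OF ab]])
    moreover have "((\<lambda>b'. iterpd [False] F (a,b')) has_vector_derivative iterpd [True,False] F (a,b)) (at b)"
      by (rule smooth_dir_v[OF sm inW[OF ab]])
    moreover have "norm (iterpd [True,False] F (a,b) - A) \<le> \<epsilon>"
      using d1(2)[OF inW[OF ab]] near[OF ab] s by (simp add: dist_norm)
    ultimately show "((\<lambda>a'. F (a', b)) has_vector_derivative iterpd [False] F (a, b)) (at a) \<and>
        ((\<lambda>b'. iterpd [False] F (a, b')) has_vector_derivative iterpd [True, False] F (a, b)) (at b) \<and>
        norm (iterpd [True, False] F (a, b) - A) \<le> \<epsilon>" by simp
  qed (use s in auto)
  have est2: "norm (Dl - (s * s) *\<^sub>R B) \<le> \<epsilon> * s * s"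
  proof -
    have "norm ((\<lambda>z. F(snd z, fst z)) (y+s,x+s) - (\<lambda>z. F(snd z, fst z)) (y+s,x)
             - (\<lambda>z. F(snd z, fst z)) (y,x+s) + (\<lambda>z. F(snd z, fst z)) (y,x) - (s * s) *\<^sub>R B) \<le> \<epsilon> * s * s"
    proof (rule delta_est[where gu="\<lambda>z. iterpd [True] F (snd z, fst z)" and guv="\<lambda>z. iterpd [False,True] F (snd z, fst z)"])
      fix b a assume ab: "b \<in> {y..y+s}" "a \<in> {x..x+s}"
      have "((\<lambda>b'. iterpd [] F (a,b')) has_vector_derivative iterpd [True] F (a,b)) (at b)"
        by (rule smooth_dir_v[OF sm inW[OF ab(2,1)]])
      moreover have "((\<lambda>a'. iterpd [True] F (a',b)) has_vector_derivative iterpd [False,True] F (a,b)) (at a)"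
        by (rule smooth_dir_u[OF sm inW[OF ab(2,1)]])
      moreover have "norm (iterpd [False,True] F (a,b) - B) \<le> \<epsilon>"
        using d2(2)[OF inW[OF ab(2,1)]] near[OF ab(2,1)] s by (simp add: dist_norm)
      ultimately show "((\<lambda>b'. (\<lambda>z. F (snd z, fst z)) (b', a)) has_vector_derivative (\<lambda>z. iterpd [True] F (snd z, fst z)) (b, a)) (at b) \<and>
          ((\<lambda>a'. (\<lambda>z. iterpd [True] F (snd z, fst z)) (b, a')) has_vector_derivative (\<lambda>z. iterpd [False, True] F (snd z, fst z)) (b, a)) (at a) \<and>
          norm ((\<lambda>z. iterpd [False, True] F (snd z, fst z)) (b, a) - B) \<le> \<epsilon>" by simp
    qed (use s in auto)
    then show ?thesis unfolding Dl_def by (simp add: algebra_simps)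
  qed
  have eq: "(s * s) *\<^sub>R (A - B) = (Dl - (s * s) *\<^sub>R B) - (Dl - (s * s) *\<^sub>R A)"
    by (simp add: algebra_simps)
  have "norm ((s * s) *\<^sub>R (A - B)) \<le> norm (Dl - (s * s) *\<^sub>R B) + norm (Dl - (s * s) *\<^sub>R A)"
    unfolding eq by (rule norm_triangle_ineq4)
  also have "\<dots> \<le> 2 * \<epsilon> * (s * s)" using est1 est2 by simp
  finally have "(s * s) * norm (A - B) \<le> (s * s) * (2*\<epsilon>)" using s by (simp add: mult_ac)
  then have "norm (A - B) \<le> 2*\<epsilon>" using s by (simp add: mult_le_cancel_left_pos)
  then show False using \<open>\<epsilon> > 0\<close> by (simp add: \<epsilon>_def)
qed



lemma gram_identity:
  fixes t u v :: "real^3"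
  shows "((u\<bullet>u)*(v\<bullet>v) - (u\<bullet>v)^2) *\<^sub>R t =
    ((v\<bullet>v)*(t\<bullet>u) - (u\<bullet>v)*(t\<bullet>v)) *\<^sub>R u + ((u\<bullet>u)*(t\<bullet>v) - (u\<bullet>v)*(t\<bullet>u)) *\<^sub>R v
    + (t \<bullet> cross3 u v) *\<^sub>R cross3 u v"
  unfolding vec_eq_iff forall_3
  by (simp add: cross3_simps power2_eq_square)

lemma triple_swap: fixes x y z :: "real^3" shows "x \<bullet> cross3 y z = - (y \<bullet> cross3 x z)"
  by (simp add: cross3_simps)

lemma scalar_ff:
  fixes E F G L M N :: real
  assumes "E > 0" "E*G - F^2 > 0" "E*N - 2*F*M + G*L = 0" "L*N = M^2"
  shows "L = 0 \<and> M = 0 \<and> N = 0"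
proof -
  have "E*N + G*L = 2*F*M" using assms(3) by linarith
  have "(E*N - G*L)^2 = (E*N + G*L)^2 - 4*E*G*(L*N)" by algebra
  also have "\<dots> = (2*F*M)^2 - 4*E*G*M^2"
    using assms(4) \<open>E*N + G*L = 2*F*M\<close> by simp
  also have "\<dots> = 4*F^2*M^2 - 4*E*G*M^2" by algebra
  also have "\<dots> = - 4*(E*G - F^2)*M^2" by algebra
  finally have eq: "(E*N - G*L)^2 = - 4*(E*G - F^2)*M^2" .
  have "M^2 = 0"
  proof (rule ccontr)
    assume "M^2 \<noteq> 0" then have "M^2 > 0" by simp
    then have "- 4*(E*G - F^2)*M^2 < 0" using assms(2) by (simp add: mult_pos_pos mult_neg_pos)
    moreover have "(E*N - G*L)^2 \<ge> 0" by simp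
    ultimately show False using eq by linarith
  qed
  then have M: "M = 0" by simp
  with eq have "E*N = G*L" using assms(2) by simp
  with assms(3) M have "E*N = 0" by simp
  then have N: "N = 0" using assms(1) by simp
  have "E*G > 0" using assms(2) by (smt (verit) zero_le_power2)
  then have "G > 0" using assms(1) by (simp add: zero_less_mult_iff)
  then have "L = 0" using \<open>E*N = G*L\<close> N by simp
  with M N show ?thesis by simp
qed



definition Cx :: "(real \<times> real \<Rightarrow> real^3) \<Rightarrow> real \<times> real \<Rightarrow> real^3" where
  "Cx F w = cross3 (iterpd [False] F w) (iterpd [True] F w)"

lemma bounded_bilinear_cross3: "bounded_bilinear (cross3 :: real^3 \<Rightarrow> real^3 \<Rightarrow> real^3)"
  using bilinear_cross bilinear_conv_bounded_bilinear by blast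

lemma F_frechet:
  assumes "smooth_on W F" "open W" "w \<in> W"
  shows "(F has_derivative (\<lambda>h. fst h *\<^sub>R iterpd [False] F w + snd h *\<^sub>R iterpd [True] F w)) (at w)"
  using iterpd_frechet[OF assms, of "[]"] by simp

lemma Cx_frechet:
  assumes "smooth_on W F" "open W" "w \<in> W"
  shows "(Cx F has_derivative (\<lambda>h.
     cross3 (fst h *\<^sub>R iterpd [False,False] F w + snd h *\<^sub>R iterpd [True,False] F w) (iterpd [True] F w)
   + cross3 (iterpd [False] F w) (fst h *\<^sub>R iterpd [False,True] F w + snd h *\<^sub>R iterpd [True,True] F w))) (at w)"
proof -
  have 1: "(iterpd [False] F has_derivative (\<lambda>h. fst h *\<^sub>R iterpd [False,False] F w + snd h *\<^sub>R iterpd [True,False] F w)) (at w)"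
    using iterpd_frechet[OF assms, of "[False]"] by simp
  have 2: "(iterpd [True] F has_derivative (\<lambda>h. fst h *\<^sub>R iterpd [False,True] F w + snd h *\<^sub>R iterpd [True,True] F w)) (at w)"
    using iterpd_frechet[OF assms, of "[True]"] by simp
  show ?thesis unfolding Cx_def
    using bounded_bilinear.FDERIV[OF bounded_bilinear_cross3 1 2] by (simp add: add.commute)
qed

lemma pointwise_flat:
  assumes sm: "smooth_on W F" and oW: "open W" and wW: "w \<in> W" and cr: "Cx F w \<noteq> 0"
    and oU: "open U" and wU: "w \<in> U" and UW: "U \<subseteq> W"
    and zero: "\<And>z. z \<in> U \<Longrightarrow> (a + c *\<^sub>R F z) \<bullet> Cx F z = 0"
    and tne: "a + c *\<^sub>R F w \<noteq> 0"
    and H: "mean_curvature F w = 0"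
  shows "Cx F w \<bullet> iterpd [False,False] F w = 0 \<and> Cx F w \<bullet> iterpd [False,True] F w = 0
       \<and> Cx F w \<bullet> iterpd [True,True] F w = 0"
proof -
  define Fu where "Fu = iterpd [False] F w"
  define Fv where "Fv = iterpd [True] F w"
  define P where "P = iterpd [False,False] F w"
  define Q where "Q = iterpd [False,True] F w"
  define R where "R = iterpd [True,True] F w"
  define C where "C = Cx F w"
  define t where "t = a + c *\<^sub>R F w"
  have C: "C = cross3 Fu Fv" by (simp add: C_def Cx_def Fu_def Fv_def)
  have sym: "iterpd [True,False] F w = Q" unfolding Q_def by (rule schwarz[OF sm oW wW])
  define \<Phi> where "\<Phi> z = (a + c *\<^sub>R F z) \<bullet> Cx F z" for z
  have dF: "((\<lambda>z. a + c *\<^sub>R F z) has_derivative (\<lambda>h. c *\<^sub>R (fst h *\<^sub>R Fu + snd h *\<^sub>R Fv))) (at w)"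
    using F_frechet[OF sm oW wW] unfolding Fu_def Fv_def
    by (auto intro!: derivative_eq_intros)
  have dC: "(Cx F has_derivative (\<lambda>h. cross3 (fst h *\<^sub>R P + snd h *\<^sub>R Q) Fv + cross3 Fu (fst h *\<^sub>R Q + snd h *\<^sub>R R))) (at w)"
    using Cx_frechet[OF sm oW wW] sym unfolding Fu_def Fv_def P_def Q_def R_def by simp
  have d\<Phi>: "(\<Phi> has_derivative (\<lambda>h. (a + c *\<^sub>R F w) \<bullet> (cross3 (fst h *\<^sub>R P + snd h *\<^sub>R Q) Fv + cross3 Fu (fst h *\<^sub>R Q + snd h *\<^sub>R R))
        + (c *\<^sub>R (fst h *\<^sub>R Fu + snd h *\<^sub>R Fv)) \<bullet> Cx F w)) (at w)"
    unfolding \<Phi>_def using has_derivative_inner[OF dF dC] .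
  have d0: "(\<Phi> has_derivative (\<lambda>h. 0)) (at w)"
    by (rule has_derivative_transform_within_open[of "\<lambda>z. 0" _ _ _ U]) (use oU wU zero \<Phi>_def in auto)
  have eqD: "(\<lambda>h. (a + c *\<^sub>R F w) \<bullet> (cross3 (fst h *\<^sub>R P + snd h *\<^sub>R Q) Fv + cross3 Fu (fst h *\<^sub>R Q + snd h *\<^sub>R R))
        + (c *\<^sub>R (fst h *\<^sub>R Fu + snd h *\<^sub>R Fv)) \<bullet> Cx F w) = (\<lambda>h. 0)"
    by (rule has_derivative_unique[OF d\<Phi> d0])
  have FuC: "Fu \<bullet> C = 0" "Fv \<bullet> C = 0" unfolding C by (simp_all add: dot_cross_self)
  have e1: "t \<bullet> (cross3 P Fv + cross3 Fu Q) = 0"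
    using fun_cong[OF eqD, of "(1,0)"] FuC unfolding t_def C_def by (simp add: inner_add_left)
  have e2: "t \<bullet> (cross3 Q Fv + cross3 Fu R) = 0"
    using fun_cong[OF eqD, of "(0,1)"] FuC unfolding t_def C_def by (simp add: inner_add_left)
  have tC: "t \<bullet> C = 0" using zero[OF wU] unfolding t_def C_def .
  define E where "E = Fu \<bullet> Fu"
  define Fm where "Fm = Fu \<bullet> Fv"
  define G where "G = Fv \<bullet> Fv"
  define De where "De = E*G - Fm^2"
  define al where "al = G*(t\<bullet>Fu) - Fm*(t\<bullet>Fv)"
  define be where "be = E*(t\<bullet>Fv) - Fm*(t\<bullet>Fu)"
  have gram: "De *\<^sub>R t = al *\<^sub>R Fu + be *\<^sub>R Fv"
    using gram_identity[of Fu Fv t] tC unfolding De_def al_def be_def E_def Fm_def G_def C by simp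
  define L where "L = C \<bullet> P"
  define M where "M = C \<bullet> Q"
  define N where "N = C \<bullet> R"
  have i1: "Fu \<bullet> cross3 P Fv = - L" "Fv \<bullet> cross3 P Fv = 0" "Fu \<bullet> cross3 Fu Q = 0" "Fv \<bullet> cross3 Fu Q = - M"
    "Fu \<bullet> cross3 Q Fv = - M" "Fv \<bullet> cross3 Q Fv = 0" "Fu \<bullet> cross3 Fu R = 0" "Fv \<bullet> cross3 Fu R = - N"
    unfolding L_def M_def N_def C by (simp_all add: cross3_simps)
  have "De * (t \<bullet> (cross3 P Fv + cross3 Fu Q)) = (De *\<^sub>R t) \<bullet> (cross3 P Fv + cross3 Fu Q)" by simp
  also have "\<dots> = - al * L - be * M" unfolding gram by (simp add: inner_add_left inner_add_right i1)
  finally have q1: "al * L + be * M = 0" using e1 by simp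
  have "De * (t \<bullet> (cross3 Q Fv + cross3 Fu R)) = (De *\<^sub>R t) \<bullet> (cross3 Q Fv + cross3 Fu R)" by simp
  also have "\<dots> = - al * M - be * N" unfolding gram by (simp add: inner_add_left inner_add_right i1)
  finally have q2: "al * M + be * N = 0" using e2 by simp
  have Cn: "C \<noteq> 0" using cr C_def by simp
  have De_eq: "De = (norm C)^2"
    using norm_cross_dot[of Fu Fv] unfolding De_def E_def Fm_def G_def C
    by (simp add: power_mult_distrib power2_norm_eq_inner[symmetric])
  have Dep: "De > 0" using De_eq Cn by simp
  have "al \<noteq> 0 \<or> be \<noteq> 0"
  proof (rule ccontr)
    assume "\<not> (al \<noteq> 0 \<or> be \<noteq> 0)"
    then have "De *\<^sub>R t = 0" using gram by simp
    then show False using Dep tne t_def by simp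
  qed
  then have LN: "L * N = M^2"
  proof
    assume "al \<noteq> 0"
    have "al * (L*N - M^2) = N * (al*L + be*M) - M * (al*M + be*N)" by (simp add: algebra_simps power2_eq_square)
    then show ?thesis using q1 q2 \<open>al \<noteq> 0\<close> by simp
  next
    assume "be \<noteq> 0"
    have "be * (L*N - M^2) = L * (al*M + be*N) - M * (al*L + be*M)" by (simp add: algebra_simps power2_eq_square)
    then show ?thesis using q1 q2 \<open>be \<noteq> 0\<close> by simp
  qed
  have Ep: "E > 0" using Cn C unfolding E_def by (auto simp: inner_gt_zero_iff)
  have Hn: "E*N - 2*Fm*M + G*L = 0"
  proof -
    define n where "n = (1 / norm C) *\<^sub>R C"
    have "mean_curvature F w = (E * (R \<bullet> n) - 2 * Fm * (Q \<bullet> n) + G * (P \<bullet> n)) / (2 * De)"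
      unfolding mean_curvature_def Let_def n_def C De_def E_def Fm_def G_def P_def Q_def R_def Fu_def Fv_def
      by simp
    then have "E * (R \<bullet> n) - 2 * Fm * (Q \<bullet> n) + G * (P \<bullet> n) = 0" using H Dep by simp
    then have "(1 / norm C) * (E*N - 2*Fm*M + G*L) = 0"
      unfolding n_def L_def M_def N_def by (simp add: algebra_simps inner_commute)
    then show ?thesis using Cn by simp
  qed
  have "L = 0 \<and> M = 0 \<and> N = 0"
    by (rule scalar_ff[of E G Fm]) (use Ep Dep De_def Hn LN in auto)
  then show ?thesis unfolding L_def M_def N_def C_def P_def Q_def R_def by simp
qed



definition flat_at :: "(real \<times> real \<Rightarrow> real^3) \<Rightarrow> real \<times> real \<Rightarrow> bool" where
  "flat_at F w \<longleftrightarrow> Cx F w \<bullet> iterpd [False,False] F w = 0 \<and> Cx F w \<bullet> iterpd [False,True] F w = 0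
       \<and> Cx F w \<bullet> iterpd [True,True] F w = 0"

lemma Cx_cont: "smooth_on W F \<Longrightarrow> continuous_on W (Cx F)"
  unfolding Cx_def by (intro continuous_on_cross smooth_cont)

lemma deriv_const_zero:
  assumes "(F has_derivative (\<lambda>h. fst h *\<^sub>R u + snd h *\<^sub>R v)) (at w)"
    and "open B" "w \<in> B" "\<And>z. z \<in> B \<Longrightarrow> F z = k"
  shows "u = 0"
proof -
  have "(F has_derivative (\<lambda>h. 0)) (at w)"
    by (rule has_derivative_transform_within_open[of "\<lambda>z. k" _ _ _ B]) (use assms in auto)
  from has_derivative_unique[OF assms(1) this] have "(\<lambda>h. fst h *\<^sub>R u + snd h *\<^sub>R v) = (\<lambda>h. 0)" .
  from fun_cong[OF this, of "(1,0)"] show ?thesis by simp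
qed

lemma flat_all:
  assumes sm: "smooth_on W F" and oW: "open W" and cr: "\<And>z. z \<in> W \<Longrightarrow> Cx F z \<noteq> 0"
    and zero: "\<And>z. z \<in> W \<inter> halfplane \<Longrightarrow> (a + c *\<^sub>R F z) \<bullet> Cx F z = 0"
    and H: "\<And>z. z \<in> W \<inter> halfplane \<Longrightarrow> mean_curvature F z = 0"
    and nz: "a \<noteq> 0 \<or> c \<noteq> 0"
    and w: "w \<in> W \<inter> halfplane"
  shows "flat_at F w"
proof (rule ccontr)
  define q where "q z = \<bar>Cx F z \<bullet> iterpd [False,False] F z\<bar> + \<bar>Cx F z \<bullet> iterpd [False,True] F z\<bar>
       + \<bar>Cx F z \<bullet> iterpd [True,True] F z\<bar>" for z
  assume "\<not> flat_at F w"
  then have qw: "q w > 0" unfolding flat_at_def q_def by auto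
  have cq: "continuous_on W q" unfolding q_def
    by (intro continuous_intros Cx_cont[OF sm] smooth_cont[OF sm])
  obtain d where d: "d > 0" "\<And>z. z \<in> W \<Longrightarrow> dist z w < d \<Longrightarrow> dist (q z) (q w) < q w"
    using cq qw w unfolding continuous_on_iff by (metis IntD1)
  obtain r where r: "r > 0" "ball w r \<subseteq> W" using oW w open_contains_ball by blast
  define s where "s = min d r / 2"
  have s: "s > 0" "s < d" "s < r" using d r by (auto simp: s_def)
  define w' where "w' = (fst w, snd w + s)"
  have dw': "dist w' w = s" using s(1) by (cases w) (simp add: w'_def dist_Pair_Pair dist_real_def)
  define B where "B = ball w' (min (d - s) (r - s)) \<inter> {z. snd z > 0}"
  have oB: "open B" unfolding B_def by (intro open_Int open_ball open_halfspace_component_gt) (simp add: open_Collect_less continuous_on_snd continuous_on_const)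
  have w'B: "w' \<in> B" using s w unfolding B_def w'_def halfplane_def by auto
  have Bsub: "z \<in> W" "dist z w < d" "snd z \<ge> 0" if "z \<in> B" for z
  proof -
    have "dist z w \<le> dist z w' + dist w' w" by (rule dist_triangle)
    then have dz: "dist z w < min d r" using that dw' unfolding B_def by (auto simp: dist_commute)
    then show "z \<in> W" using r by (auto simp: dist_commute)
    show "dist z w < d" using dz by simp
    show "snd z \<ge> 0" using that unfolding B_def by simp
  qed
  have tz: "a + c *\<^sub>R F z = 0" if "z \<in> B" for z
  proof (rule ccontr)
    assume ne: "a + c *\<^sub>R F z \<noteq> 0"
    have zWH: "z \<in> W \<inter> halfplane" using Bsub[OF that] by (auto simp: halfplane_def)
    have "flat_at F z" unfolding flat_at_def
      by (rule pointwise_flat[OF sm oW _ cr oB that _ zero ne H]) (use Bsub zWH in \<open>auto simp: halfplane_def\<close>)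
    moreover have "q z > 0" using d(2)[OF Bsub(1,2)[OF that]] qw by (auto simp: dist_real_def)
    ultimately show False unfolding flat_at_def q_def by simp
  qed
  show False
  proof (cases "c = 0")
    case True
    then show False using tz[OF w'B] nz by simp
  next
    case False
    have "F z = - (1/c) *\<^sub>R a" if "z \<in> B" for z
    proof -
      have "c *\<^sub>R F z = - a" using tz[OF that] by (simp add: eq_neg_iff_add_eq_0 add.commute)
      then have "(1/c) *\<^sub>R (c *\<^sub>R F z) = (1/c) *\<^sub>R (- a)" by simp
      then show ?thesis using False by simp
    qed
    then have "iterpd [False] F w' = 0"
      by (intro deriv_const_zero[OF F_frechet[OF sm oW] oB w'B]) (use Bsub w'B in auto)
    then have "Cx F w' = 0" by (simp add: Cx_def)
    then show False using cr Bsub(1)[OF w'B] by blast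
  qed
qed



lemma cross_cross_self: fixes c d :: "real^3" shows "cross3 c (cross3 c d) = (c \<bullet> d) *\<^sub>R c - (c \<bullet> c) *\<^sub>R d"
  unfolding vec_eq_iff forall_3 by (simp add: cross3_simps)

lemma normalize_deriv_zero:
  fixes g :: "'a::real_normed_vector \<Rightarrow> real^3"
  assumes dg: "(g has_derivative g') (at w)" and gw: "g w \<noteq> 0" and cz: "\<And>h. cross3 (g w) (g' h) = 0"
  shows "((\<lambda>z. inverse (norm (g z)) *\<^sub>R g z) has_derivative (\<lambda>h. 0)) (at w)"
proof -
  have dn: "((\<lambda>z. norm (g z)) has_derivative (\<lambda>h. g' h \<bullet> sgn (g w))) (at w)"
    using has_derivative_compose[OF dg has_derivative_norm[OF gw]] by (simp add: o_def)
  have ngw: "norm (g w) \<noteq> 0" using gw by simp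
  have di: "((\<lambda>z. inverse (norm (g z))) has_derivative
      (\<lambda>h. - (inverse (norm (g w)) * (g' h \<bullet> sgn (g w)) * inverse (norm (g w))))) (at w)"
    by (rule Deriv.has_derivative_inverse[OF ngw dn])
  have d: "((\<lambda>z. inverse (norm (g z)) *\<^sub>R g z) has_derivative
      (\<lambda>h. inverse (norm (g w)) *\<^sub>R g' h + (- (inverse (norm (g w)) * (g' h \<bullet> sgn (g w)) * inverse (norm (g w)))) *\<^sub>R g w)) (at w)"
    using has_derivative_scaleR[OF di dg] by simp
  have "(\<lambda>h. inverse (norm (g w)) *\<^sub>R g' h + (- (inverse (norm (g w)) * (g' h \<bullet> sgn (g w)) * inverse (norm (g w)))) *\<^sub>R g w)
      = (\<lambda>h. 0)"
  proof
    fix h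
    define n where "n = norm (g w)"
    have np: "n > 0" using gw n_def by simp
    have gg: "g w \<bullet> g w = n^2" by (simp add: n_def power2_norm_eq_inner)
    have "(g w \<bullet> g w) *\<^sub>R g' h = (g w \<bullet> g' h) *\<^sub>R g w"
      using cross_cross_self[of "g w" "g' h"] cz[of h] by simp
    then have eq: "g' h = ((g w \<bullet> g' h) / n^2) *\<^sub>R g w" using np gg
      by (metis (no_types, lifting) divide_inverse_commute power_not_zero less_irrefl scaleR_scaleR inverse_eq_divide scaleR_one right_inverse nonzero_mult_div_cancel_left mult.commute divide_divide_eq_left' divide_self_if)
    have sg: "g' h \<bullet> sgn (g w) = (g w \<bullet> g' h) / n"
      by (simp add: sgn_div_norm n_def inner_commute divide_inverse mult.commute)
    show "inverse (norm (g w)) *\<^sub>R g' h + (- (inverse (norm (g w)) * (g' h \<bullet> sgn (g w)) * inverse (norm (g w)))) *\<^sub>R g w = 0"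
      apply (subst eq) unfolding sg n_def[symmetric] using np
      by (simp add: field_simps power2_eq_square)
  qed
  then show ?thesis using d by simp
qed



definition Nn :: "(real \<times> real \<Rightarrow> real^3) \<Rightarrow> real \<times> real \<Rightarrow> real^3" where
  "Nn F z = inverse (norm (Cx F z)) *\<^sub>R Cx F z"

lemma cross_triple_expand: fixes a b c :: "real^3" shows "cross3 a (cross3 b c) = (a \<bullet> c) *\<^sub>R b - (a \<bullet> b) *\<^sub>R c"
  unfolding vec_eq_iff forall_3 by (simp add: cross3_simps)

lemma Nn_deriv_zero:
  assumes sm: "smooth_on W F" and oW: "open W" and wW: "w \<in> W" and cr: "Cx F w \<noteq> 0" and fl: "flat_at F w"
  shows "(Nn F has_derivative (\<lambda>h. 0)) (at w)"
  unfolding Nn_def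
proof (rule normalize_deriv_zero[OF Cx_frechet[OF sm oW wW] cr])
  fix h :: "real \<times> real"
  have sym: "iterpd [True,False] F w = iterpd [False,True] F w" by (rule schwarz[OF sm oW wW])
  define X where "X = fst h *\<^sub>R iterpd [False, False] F w + snd h *\<^sub>R iterpd [False, True] F w"
  define Y where "Y = fst h *\<^sub>R iterpd [False, True] F w + snd h *\<^sub>R iterpd [True, True] F w"
  have CX: "Cx F w \<bullet> X = 0" "Cx F w \<bullet> Y = 0" using fl unfolding flat_at_def X_def Y_def
    by (simp_all add: inner_add_right)
  have Cu: "Cx F w \<bullet> iterpd [False] F w = 0" "Cx F w \<bullet> iterpd [True] F w = 0"
    unfolding Cx_def by (simp_all add: dot_cross_self)
  have "cross3 (Cx F w) (cross3 X (iterpd [True] F w) + cross3 (iterpd [False] F w) Y) = 0"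
    unfolding cross_add_right cross_triple_expand CX Cu by simp
  then show "cross3 (Cx F w) (cross3 (fst h *\<^sub>R iterpd [False, False] F w + snd h *\<^sub>R iterpd [True, False] F w) (iterpd [True] F w) +
        cross3 (iterpd [False] F w) (fst h *\<^sub>R iterpd [False, True] F w + snd h *\<^sub>R iterpd [True, True] F w)) = 0"
    unfolding X_def Y_def sym .
qed

lemma FN_deriv_zero:
  assumes sm: "smooth_on W F" and oW: "open W" and wW: "w \<in> W" and cr: "Cx F w \<noteq> 0" and fl: "flat_at F w"
  shows "((\<lambda>z. F z \<bullet> Nn F z) has_derivative (\<lambda>h. 0)) (at w)"
proof -
  have "((\<lambda>z. F z \<bullet> Nn F z) has_derivative (\<lambda>h. F w \<bullet> 0 + (fst h *\<^sub>R iterpd [False] F w + snd h *\<^sub>R iterpd [True] F w) \<bullet> Nn F w)) (at w)"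
    by (rule has_derivative_inner[OF F_frechet[OF sm oW wW] Nn_deriv_zero[OF assms]])
  moreover have "(\<lambda>h. F w \<bullet> 0 + (fst h *\<^sub>R iterpd [False] F w + snd h *\<^sub>R iterpd [True] F w) \<bullet> Nn F w) = (\<lambda>h. 0)"
    by (auto simp: Nn_def Cx_def inner_add_left dot_cross_self)
  ultimately show ?thesis by simp
qed

lemma convex_halfplane: "convex halfplane"
  unfolding halfplane_def convex_def by auto

lemma local_const:
  assumes sm: "smooth_on W F" and oW: "open W" and cr: "\<And>z. z \<in> W \<Longrightarrow> Cx F z \<noteq> 0"
    and fl: "\<And>z. z \<in> W \<inter> halfplane \<Longrightarrow> flat_at F z"
    and w0: "w0 \<in> W"
  obtains V n k where "open V" "w0 \<in> V" "V \<subseteq> W" "convex (V \<inter> halfplane)"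
    "\<And>z. z \<in> V \<inter> halfplane \<Longrightarrow> Nn F z = n" "\<And>z. z \<in> V \<inter> halfplane \<Longrightarrow> F z \<bullet> Nn F z = k"
proof -
  obtain r where r: "r > 0" "ball w0 r \<subseteq> W" using oW w0 open_contains_ball by blast
  define V where "V = ball w0 r"
  have cv: "convex (V \<inter> halfplane)" unfolding V_def by (intro convex_Int convex_ball convex_halfplane)
  have zW: "z \<in> W" "flat_at F z" if "z \<in> V \<inter> halfplane" for z
  proof -
    show "z \<in> W" using that r unfolding V_def by auto
    then show "flat_at F z" using that fl by blast
  qed
  obtain n where n: "\<And>z. z \<in> V \<inter> halfplane \<Longrightarrow> Nn F z = n"
    using has_derivative_zero_constant[OF cv, of "Nn F"]
      Nn_deriv_zero[OF sm oW zW(1) cr[OF zW(1)] zW(2), THEN has_derivative_at_withinI] by metis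
  obtain k where k: "\<And>z. z \<in> V \<inter> halfplane \<Longrightarrow> F z \<bullet> Nn F z = k"
    using has_derivative_zero_constant[OF cv, of "\<lambda>z. F z \<bullet> Nn F z"]
      FN_deriv_zero[OF sm oW zW(1) cr[OF zW(1)] zW(2), THEN has_derivative_at_withinI] by metis
  show ?thesis by (rule that[OF _ _ _ cv n k]) (use r V_def in auto)
qed



lemma perp_parallel: fixes u a b :: "real^3"
  assumes "u \<bullet> a = 0" "u \<bullet> b = 0"
  shows "(cross3 a b \<bullet> cross3 a b) *\<^sub>R u = (u \<bullet> cross3 a b) *\<^sub>R cross3 a b"
proof -
  have "cross3 u (cross3 a b) = 0" using assms by (simp add: cross_triple_expand inner_commute)
  then have "cross3 (cross3 a b) u = 0" by (metis cross_skew neg_equal_0_iff_equal)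
  then have "cross3 (cross3 a b) (cross3 (cross3 a b) u) = 0" by simp
  then show ?thesis unfolding cross_cross_self by (simp add: inner_commute)
qed

lemma lp_facts:
  assumes "local_param M X p W \<psi> F"
  shows "open W" "p \<in> \<psi> ` (W \<inter> halfplane)" "\<exists>g. homeomorphism (W \<inter> halfplane) (\<psi> ` (W \<inter> halfplane)) \<psi> g"
    "openin (top_of_set M) (\<psi> ` (W \<inter> halfplane))" "smooth_on W F"
    "\<And>w. w \<in> W \<inter> halfplane \<Longrightarrow> X (\<psi> w) = F w" "\<And>w. w \<in> W \<Longrightarrow> Cx F w \<noteq> 0"
    "\<And>w. w \<in> W \<inter> halfplane \<Longrightarrow> \<psi> w \<in> M"
proof -
  have "\<psi> ` (W \<inter> halfplane) \<subseteq> M"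
    using assms openin_subset[of "top_of_set M" "\<psi> ` (W \<inter> halfplane)"] unfolding local_param_def by auto
  then show "\<And>w. w \<in> W \<inter> halfplane \<Longrightarrow> \<psi> w \<in> M" by auto
qed (use assms in \<open>auto simp: local_param_def Cx_def\<close>)

lemma nu_facts:
  assumes un: "unit_normal M X \<nu>" and lp: "local_param M X p W \<psi> F" and z: "z \<in> W \<inter> halfplane"
  shows "\<nu> (\<psi> z) \<bullet> iterpd [False] F z = 0" "\<nu> (\<psi> z) \<bullet> iterpd [True] F z = 0"
    "(Cx F z \<bullet> Cx F z) *\<^sub>R \<nu> (\<psi> z) = (\<nu> (\<psi> z) \<bullet> Cx F z) *\<^sub>R Cx F z"
    "\<nu> (\<psi> z) \<bullet> Cx F z \<noteq> 0"
    "\<nu> (\<psi> z) = (\<nu> (\<psi> z) \<bullet> Nn F z) *\<^sub>R Nn F z"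
proof -
  show 1: "\<nu> (\<psi> z) \<bullet> iterpd [False] F z = 0" "\<nu> (\<psi> z) \<bullet> iterpd [True] F z = 0"
    using un lp z unfolding unit_normal_def by blast+
  show 2: "(Cx F z \<bullet> Cx F z) *\<^sub>R \<nu> (\<psi> z) = (\<nu> (\<psi> z) \<bullet> Cx F z) *\<^sub>R Cx F z"
    unfolding Cx_def by (rule perp_parallel[OF 1])
  have n1: "norm (\<nu> (\<psi> z)) = 1" using un lp_facts(8)[OF lp z] unfolding unit_normal_def by blast
  have cz: "Cx F z \<noteq> 0" using lp_facts(7)[OF lp] z by blast
  show 3: "\<nu> (\<psi> z) \<bullet> Cx F z \<noteq> 0"
  proof
    assume "\<nu> (\<psi> z) \<bullet> Cx F z = 0"
    then have "(Cx F z \<bullet> Cx F z) *\<^sub>R \<nu> (\<psi> z) = 0" using 2 by simp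
    then show False using cz n1 by auto
  qed
  have "\<nu> (\<psi> z) = inverse (Cx F z \<bullet> Cx F z) *\<^sub>R ((Cx F z \<bullet> Cx F z) *\<^sub>R \<nu> (\<psi> z))"
    using cz by simp
  also have "\<dots> = ((\<nu> (\<psi> z) \<bullet> Cx F z) / (Cx F z \<bullet> Cx F z)) *\<^sub>R Cx F z" unfolding 2 by (simp add: divide_inverse mult.commute)
  also have "\<dots> = (\<nu> (\<psi> z) \<bullet> Nn F z) *\<^sub>R Nn F z"
    using cz by (simp add: Nn_def power2_norm_eq_inner[symmetric] power2_eq_square field_simps)
  finally show "\<nu> (\<psi> z) = (\<nu> (\<psi> z) \<bullet> Nn F z) *\<^sub>R Nn F z" .
qed

lemma zero_rel:
  assumes un: "unit_normal M X \<nu>" and lp: "local_param M X p W \<psi> F" and z: "z \<in> W \<inter> halfplane"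
    and rel: "\<And>q. q \<in> M \<Longrightarrow> a \<bullet> \<nu> q + c * (X q \<bullet> \<nu> q) = 0"
  shows "(a + c *\<^sub>R F z) \<bullet> Cx F z = 0"
proof -
  have "(a + c *\<^sub>R F z) \<bullet> \<nu> (\<psi> z) = 0"
    using rel[OF lp_facts(8)[OF lp z]] lp_facts(6)[OF lp z] by (simp add: inner_add_left)
  then have "(a + c *\<^sub>R F z) \<bullet> ((Cx F z \<bullet> Cx F z) *\<^sub>R \<nu> (\<psi> z)) = 0" by simp
  then have "(\<nu> (\<psi> z) \<bullet> Cx F z) * ((a + c *\<^sub>R F z) \<bullet> Cx F z) = 0"
    unfolding nu_facts(3)[OF un lp z] by simp
  then show ?thesis using nu_facts(4)[OF un lp z] by simp
qed

lemma pm_one_const: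
  fixes \<sigma> :: "'b::topological_space \<Rightarrow> real"
  assumes "connected S" "continuous_on S \<sigma>" "\<And>z. z \<in> S \<Longrightarrow> \<sigma> z = 1 \<or> \<sigma> z = -1" "x \<in> S" "y \<in> S"
  shows "\<sigma> x = \<sigma> y"
proof (rule ccontr)
  assume ne: "\<sigma> x \<noteq> \<sigma> y"
  have c: "connected (\<sigma> ` S)" by (rule connected_continuous_image[OF assms(2,1)])
  have "-1 \<in> \<sigma> ` S" "1 \<in> \<sigma> ` S" using assms(3)[OF assms(4)] assms(3)[OF assms(5)] ne assms(4,5)
    by (metis image_eqI)+
  then have "0 \<in> \<sigma> ` S" using c unfolding connected_iff_interval by (metis neg_le_0_iff_le zero_le_one)
  then show False using assms(3) by force
qed



lemma norm_Nn: "Cx F z \<noteq> 0 \<Longrightarrow> norm (Nn F z) = 1"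
  by (simp add: Nn_def)

lemma loc_const_M:
  assumes fb: "free_boundary_solution M X" and un: "unit_normal M X \<nu>"
    and rel: "\<And>q. q \<in> M \<Longrightarrow> a \<bullet> \<nu> q + c * (X q \<bullet> \<nu> q) = 0"
    and nz: "a \<noteq> 0 \<or> c \<noteq> 0" and pM: "p \<in> M"
  shows "\<exists>T. openin (top_of_set M) T \<and> p \<in> T \<and> (\<forall>q\<in>T. \<nu> q = \<nu> p \<and> X q \<bullet> \<nu> q = X p \<bullet> \<nu> p)"
proof -
  obtain W \<psi> F where lp: "local_param M X p W \<psi> F"
    using fb pM unfolding free_boundary_solution_def immersed_surface_def by blast
  note f = lp_facts[OF lp]
  obtain w0 where w0: "w0 \<in> W \<inter> halfplane" "p = \<psi> w0" using f(2) by blast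
  have H: "mean_curvature F z = 0" if "z \<in> W \<inter> halfplane" for z
    using fb lp that unfolding free_boundary_solution_def minimal_surface_def by blast
  have fl: "flat_at F z" if "z \<in> W \<inter> halfplane" for z
    by (rule flat_all[OF f(5,1,7) zero_rel[OF un lp _ rel] H nz that])
  obtain V n k where V: "open V" "w0 \<in> V" "V \<subseteq> W" "convex (V \<inter> halfplane)"
    "\<And>z. z \<in> V \<inter> halfplane \<Longrightarrow> Nn F z = n" "\<And>z. z \<in> V \<inter> halfplane \<Longrightarrow> F z \<bullet> Nn F z = k"
    using local_const[OF f(5,1,7) fl] w0 by blast
  define S where "S = V \<inter> halfplane"
  have SWH: "S \<subseteq> W \<inter> halfplane" using V(3) S_def by auto
  obtain g where hom: "homeomorphism (W \<inter> halfplane) (\<psi> ` (W \<inter> halfplane)) \<psi> g" using f(3) by blast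
  have c\<psi>: "continuous_on S \<psi>" using homeomorphism_cont1[OF hom] SWH continuous_on_subset by blast
  have c\<nu>: "continuous_on M \<nu>" using un unfolding unit_normal_def by blast
  define \<sigma> where "\<sigma> z = \<nu> (\<psi> z) \<bullet> n" for z
  have \<nu>eq: "\<nu> (\<psi> z) = \<sigma> z *\<^sub>R n" if "z \<in> S" for z
  proof -
    have zz: "z \<in> W \<inter> halfplane" "z \<in> V \<inter> halfplane" using SWH that S_def by auto
    show ?thesis using nu_facts(5)[OF un lp zz(1)] V(5)[OF zz(2)] unfolding \<sigma>_def by simp
  qed
  have n1: "norm n = 1" using V(5)[of w0] w0 V(2) norm_Nn[OF f(7)[of w0]] by auto
  have \<sigma>pm: "\<sigma> z = 1 \<or> \<sigma> z = -1" if "z \<in> S" for z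
  proof -
    have "norm (\<nu> (\<psi> z)) = 1" using un f(8) SWH that unfolding unit_normal_def by blast
    then have "\<bar>\<sigma> z\<bar> = 1" using \<nu>eq[OF that] n1 by simp
    then show ?thesis by linarith
  qed
  have c\<sigma>: "continuous_on S \<sigma>" unfolding \<sigma>_def
    by (intro continuous_intros continuous_on_compose2[OF c\<nu> c\<psi>]) (use f(8) SWH in auto)
  have w0S: "w0 \<in> S" using w0 V(2) S_def by auto
  have \<sigma>c: "\<sigma> z = \<sigma> w0" if "z \<in> S" for z
    by (rule pm_one_const[OF convex_connected[OF V(4)[folded S_def]] c\<sigma> \<sigma>pm that w0S])
  define T where "T = \<psi> ` S"
  have "openin (top_of_set (W \<inter> halfplane)) S"
  proof -
    have "S = (W \<inter> halfplane) \<inter> V" using V(3) S_def by auto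
    then show ?thesis using openin_open_Int[OF V(1)] by simp
  qed
  then have "openin (top_of_set (\<psi> ` (W \<inter> halfplane))) T" unfolding T_def by (rule homeomorphism_imp_open_map[OF hom])
  then have oT: "openin (top_of_set M) T" using f(4) openin_trans by blast
  have "\<forall>q\<in>T. \<nu> q = \<nu> p \<and> X q \<bullet> \<nu> q = X p \<bullet> \<nu> p"
  proof
    fix q assume "q \<in> T"
    then obtain z where z: "z \<in> S" "q = \<psi> z" unfolding T_def by blast
    have "\<nu> q = \<sigma> w0 *\<^sub>R n" using \<nu>eq[OF z(1)] \<sigma>c[OF z(1)] z by simp
    moreover have "\<nu> p = \<sigma> w0 *\<^sub>R n" using \<nu>eq[OF w0S] w0 by simp
    moreover have "X q \<bullet> \<nu> q = \<sigma> w0 * k"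
    proof -
      have zz: "z \<in> W \<inter> halfplane" "z \<in> V \<inter> halfplane" using SWH z(1) S_def by auto
      show ?thesis using \<nu>eq[OF z(1)] \<sigma>c[OF z(1)] z(2) f(6)[OF zz(1)] V(5)[OF zz(2)] V(6)[OF zz(2)] by simp
    qed
    moreover have "X p \<bullet> \<nu> p = \<sigma> w0 * k"
    proof -
      have zz: "w0 \<in> W \<inter> halfplane" "w0 \<in> V \<inter> halfplane" using SWH w0S S_def by auto
      show ?thesis using \<nu>eq[OF w0S] w0(2) f(6)[OF zz(1)] V(5)[OF zz(2)] V(6)[OF zz(2)] by simp
    qed
    ultimately show "\<nu> q = \<nu> p \<and> X q \<bullet> \<nu> q = X p \<bullet> \<nu> p" by (metis (no_types, lifting))
  qed
  moreover have "p \<in> T" using w0S w0 T_def by blast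
  ultimately show ?thesis using oT by blast
qed

lemma global_const:
  assumes fb: "free_boundary_solution M X" and un: "unit_normal M X \<nu>"
    and rel: "\<And>q. q \<in> M \<Longrightarrow> a \<bullet> \<nu> q + c * (X q \<bullet> \<nu> q) = 0"
    and nz: "a \<noteq> 0 \<or> c \<noteq> 0" and pM: "p \<in> M" and qM: "q \<in> M"
  shows "\<nu> q = \<nu> p \<and> X q \<bullet> \<nu> q = X p \<bullet> \<nu> p"
proof -
  have conn: "connected M" using fb unfolding free_boundary_solution_def immersed_surface_def by blast
  have "\<nu> constant_on M"
  proof (rule locally_constant_imp_constant[OF conn])
    fix p assume "p \<in> M"
    from loc_const_M[OF fb un rel nz this] show "\<exists>T. openin (top_of_set M) T \<and> p \<in> T \<and> (\<forall>x\<in>T. \<nu> x = \<nu> p)" by blast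
  qed
  moreover have "(\<lambda>q. X q \<bullet> \<nu> q) constant_on M"
  proof (rule locally_constant_imp_constant[OF conn])
    fix p assume "p \<in> M"
    from loc_const_M[OF fb un rel nz this] show "\<exists>T. openin (top_of_set M) T \<and> p \<in> T \<and> (\<forall>x\<in>T. X x \<bullet> \<nu> x = X p \<bullet> \<nu> p)" by blast
  qed
  ultimately show ?thesis using pM qM unfolding constant_on_def by (metis (no_types, lifting))
qed



lemma De_pos: fixes u v :: "real^3" assumes "cross3 u v \<noteq> 0"
  shows "(u\<bullet>u)*(v\<bullet>v) - (u\<bullet>v)^2 > 0"
proof -
  have "(u\<bullet>u)*(v\<bullet>v) - (u\<bullet>v)^2 = (norm (cross3 u v))^2"
    using norm_cross_dot[of u v] by (simp add: power_mult_distrib power2_norm_eq_inner[symmetric])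
  then show ?thesis using assms by simp
qed

lemma perp3_zero: fixes z u v :: "real^3"
  assumes "cross3 u v \<noteq> 0" "z \<bullet> u = 0" "z \<bullet> v = 0" "z \<bullet> cross3 u v = 0"
  shows "z = 0"
proof -
  have "((u\<bullet>u)*(v\<bullet>v) - (u\<bullet>v)^2) *\<^sub>R z = 0"
    using gram_identity[of u v z] assms(2-4) by (simp add: inner_commute)
  then show ?thesis using De_pos[OF assms(1)] by simp
qed

lemma interior_open:
  assumes fb: "free_boundary_solution M X" and un: "unit_normal M X \<nu>"
    and cn: "\<And>q. q \<in> M \<Longrightarrow> \<nu> q = n0" and ck: "\<And>q. q \<in> M \<Longrightarrow> X q \<bullet> n0 = k0"
    and pM: "p \<in> M" and pi: "norm (X p) < 1"
  shows "\<exists>e>0. \<forall>y. n0 \<bullet> y = k0 \<and> dist y (X p) < e \<longrightarrow> y \<in> X ` M"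
proof -
  obtain W \<psi> F where lp: "local_param M X p W \<psi> F"
    using fb pM unfolding free_boundary_solution_def immersed_surface_def by blast
  note f = lp_facts[OF lp]
  obtain w0 where w0: "w0 \<in> W \<inter> halfplane" "p = \<psi> w0" using f(2) by blast
  have sw0: "snd w0 > 0"
  proof (rule ccontr)
    assume "\<not> snd w0 > 0"
    then have "snd w0 = 0" using w0 by (simp add: halfplane_def)
    then have "p \<in> surface_boundary M X" unfolding surface_boundary_def using pM lp w0 by blast
    then show False using fb pM pi unfolding free_boundary_solution_def by auto
  qed
  obtain r0 where r0: "r0 > 0" "ball w0 r0 \<subseteq> W" using f(1) w0 open_contains_ball by blast
  define r where "r = min r0 (snd w0)"
  have r: "r > 0" "ball w0 r \<subseteq> W \<inter> halfplane"
  proof -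
    show "r > 0" using r0 sw0 by (simp add: r_def)
    show "ball w0 r \<subseteq> W \<inter> halfplane"
    proof
      fix z assume z: "z \<in> ball w0 r"
      then have "z \<in> W" using r0 r_def by auto
      moreover have "\<bar>snd z - snd w0\<bar> \<le> dist z w0" using dist_snd_le[of z w0] by (simp add: dist_real_def)
      then have "snd z > 0" using z r_def by (auto simp: dist_commute)
      ultimately show "z \<in> W \<inter> halfplane" by (simp add: halfplane_def)
    qed
  qed
  define u where "u = iterpd [False] F w0"
  define v where "v = iterpd [True] F w0"
  define E where "E = u \<bullet> u"
  define Fm where "Fm = u \<bullet> v"
  define G where "G = v \<bullet> v"
  define De where "De = E*G - Fm^2"
  have cuv: "cross3 u v \<noteq> 0" using f(7) w0 unfolding Cx_def u_def v_def by auto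
  have Dep: "De > 0" using De_pos[OF cuv] unfolding De_def E_def Fm_def G_def .
  define Gm where "Gm z = (u \<bullet> F z, v \<bullet> F z)" for z
  define Gd where "Gd h = (u \<bullet> (fst h *\<^sub>R u + snd h *\<^sub>R v), v \<bullet> (fst h *\<^sub>R u + snd h *\<^sub>R v))" for h :: "real \<times> real"
  define gi where "gi y = ((G * fst y - Fm * snd y) / De, (E * snd y - Fm * fst y) / De)" for y :: "real \<times> real"
  have w0W: "w0 \<in> W" using w0 by simp
  have dG: "(Gm has_derivative Gd) (at w0)"
  proof -
    have dF: "(F has_derivative (\<lambda>h. fst h *\<^sub>R u + snd h *\<^sub>R v)) (at w0)"
      using F_frechet[OF f(5,1) w0W] unfolding u_def v_def .
    have 1: "((\<lambda>z. u \<bullet> F z) has_derivative (\<lambda>h. u \<bullet> (fst h *\<^sub>R u + snd h *\<^sub>R v))) (at w0)"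
      using has_derivative_inner[OF has_derivative_const dF] by simp
    have 2: "((\<lambda>z. v \<bullet> F z) has_derivative (\<lambda>h. v \<bullet> (fst h *\<^sub>R u + snd h *\<^sub>R v))) (at w0)"
      using has_derivative_inner[OF has_derivative_const dF] by simp
    show ?thesis unfolding Gm_def Gd_def using has_derivative_Pair[OF 1 2] .
  qed
  have bl: "bounded_linear gi"
  proof -
    have "linear gi" unfolding gi_def
      by (rule linearI) (auto simp: algebra_simps add_divide_distrib diff_divide_distrib)
    then show ?thesis by (simp add: linear_conv_bounded_linear)
  qed
  have inv: "Gd \<circ> gi = id"
  proof
    fix y :: "real \<times> real"
    obtain y1 y2 where y: "y = (y1,y2)" by force
    have "Gd (gi y) = ((E*(G*y1 - Fm*y2) + Fm*(E*y2 - Fm*y1)) / De, (Fm*(G*y1 - Fm*y2) + G*(E*y2 - Fm*y1)) / De)"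
      unfolding Gd_def gi_def y E_def Fm_def G_def
      by (simp add: inner_add_right inner_commute add_divide_distrib diff_divide_distrib algebra_simps)
    also have "\<dots> = (y1, y2)" using Dep unfolding De_def
      by (simp add: field_simps power2_eq_square)
    finally show "(Gd \<circ> gi) y = id y" using y by simp
  qed
  have cG: "continuous_on (ball w0 r) Gm"
  proof -
    have "continuous_on W F" using smooth_cont[OF f(5), of "[]"] by simp
    then have "continuous_on (ball w0 r) F" using r continuous_on_subset by blast
    then show ?thesis unfolding Gm_def by (intro continuous_intros)
  qed
  have "Gm w0 \<in> interior (Gm ` ball w0 r)"
    by (rule sussmann_open_mapping[OF open_ball cG _ dG bl inv]) (use r in auto)
  then obtain \<delta> where \<delta>: "\<delta> > 0" "ball (Gm w0) \<delta> \<subseteq> Gm ` ball w0 r"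
    by (meson interior_subset open_contains_ball open_interior subset_trans)
  define e where "e = \<delta> / (norm u + norm v + 1)"
  have np1: "norm u + norm v + 1 > 0" using norm_ge_zero[of u] norm_ge_zero[of v] by linarith
  have ep: "e > 0" using \<delta> np1 by (simp add: e_def)
  have Fw0: "F w0 = X p" using f(6)[OF w0(1)] w0(2) by simp
  have n0p: "\<nu> p = n0" using cn pM by simp
  have n0u: "n0 \<bullet> u = 0" "n0 \<bullet> v = 0" using nu_facts(1,2)[OF un lp w0(1)] n0p w0(2) u_def v_def by auto
  have n0C: "(cross3 u v \<bullet> cross3 u v) *\<^sub>R n0 = (n0 \<bullet> cross3 u v) *\<^sub>R cross3 u v" "n0 \<bullet> cross3 u v \<noteq> 0"
    using nu_facts(3,4)[OF un lp w0(1)] n0p w0(2) unfolding u_def v_def Cx_def by auto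
  show ?thesis
  proof (intro exI[of _ e] conjI allI impI ep)
    fix y assume y: "n0 \<bullet> y = k0 \<and> dist y (X p) < e"
    define Y where "Y = (u \<bullet> y, v \<bullet> y)"
    have "dist Y (Gm w0) \<le> dist (u \<bullet> y) (u \<bullet> F w0) + dist (v \<bullet> y) (v \<bullet> F w0)"
      unfolding Y_def Gm_def by (simp add: dist_Pair_Pair sqrt_sum_squares_le_sum)
    also have "\<dots> \<le> norm u * dist y (X p) + norm v * dist y (X p)"
    proof -
      have "dist (u \<bullet> y) (u \<bullet> F w0) \<le> norm u * dist y (X p)"
        using Cauchy_Schwarz_ineq2[of u "y - X p"] Fw0 by (simp add: dist_norm inner_diff_right)
      moreover have "dist (v \<bullet> y) (v \<bullet> F w0) \<le> norm v * dist y (X p)"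
        using Cauchy_Schwarz_ineq2[of v "y - X p"] Fw0 by (simp add: dist_norm inner_diff_right)
      ultimately show ?thesis by simp
    qed
    also have "\<dots> \<le> (norm u + norm v + 1) * dist y (X p)" by (simp add: algebra_simps)
    also have "\<dots> < (norm u + norm v + 1) * e" using y np1 by (intro mult_strict_left_mono) auto
    also have "\<dots> = \<delta>" unfolding e_def using np1 by simp
    finally have "Y \<in> ball (Gm w0) \<delta>" by (simp add: dist_commute)
    then obtain w where w: "w \<in> ball w0 r" "Gm w = Y" using \<delta>(2) by blast
    have wWH: "w \<in> W \<inter> halfplane" using w r by auto
    have Fw: "F w = X (\<psi> w)" using f(6)[OF wWH] by simp
    have \<psi>M: "\<psi> w \<in> M" using f(8)[OF wWH] .
    have "n0 \<bullet> F w = k0" using ck[OF \<psi>M] Fw by (simp add: inner_commute)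
    define z where "z = F w - y"
    have zu: "z \<bullet> u = 0" "z \<bullet> v = 0" using w(2) unfolding z_def Y_def Gm_def by (auto simp: inner_diff_right inner_commute[of _ u] inner_commute[of _ v])
    have zn: "z \<bullet> n0 = 0" using \<open>n0 \<bullet> F w = k0\<close> y unfolding z_def by (simp add: inner_diff_right inner_commute[of _ n0])
    have "(n0 \<bullet> cross3 u v) * (z \<bullet> cross3 u v) = z \<bullet> ((n0 \<bullet> cross3 u v) *\<^sub>R cross3 u v)" by simp
    also have "\<dots> = z \<bullet> ((cross3 u v \<bullet> cross3 u v) *\<^sub>R n0)" using n0C(1) by simp
    also have "\<dots> = 0" using zn by simp
    finally have "z \<bullet> cross3 u v = 0" using n0C(2) by simp
    then have "z = 0" using perp3_zero[OF cuv zu] by simp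
    then have "y = X (\<psi> w)" using Fw unfolding z_def by simp
    then show "y \<in> X ` M" using \<psi>M by blast
  qed
qed



lemma X_cont:
  assumes fb: "free_boundary_solution M X"
  shows "continuous_on M X"
proof -
  have "continuous (at p within M) X" if pM: "p \<in> M" for p
  proof -
    obtain W \<psi> F where lp: "local_param M X p W \<psi> F"
      using fb pM unfolding free_boundary_solution_def immersed_surface_def by blast
    note f = lp_facts[OF lp]
    define T where "T = \<psi> ` (W \<inter> halfplane)"
    obtain g where hom: "homeomorphism (W \<inter> halfplane) T \<psi> g" using f(3) T_def by blast
    have cF: "continuous_on (W \<inter> halfplane) F"
      using smooth_cont[OF f(5), of "[]"] continuous_on_subset by fastforce
    have cg: "continuous_on T g" using homeomorphism_cont2[OF hom] .
    have gT: "g ` T \<subseteq> W \<inter> halfplane" using hom unfolding homeomorphism_def by blast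
    have "continuous_on T (F \<circ> g)" by (rule continuous_on_compose[OF cg continuous_on_subset[OF cF gT]])
    moreover have "(F \<circ> g) q = X q" if qT: "q \<in> T" for q
    proof -
      obtain w where w: "w \<in> W \<inter> halfplane" "q = \<psi> w" using qT T_def by blast
      have "g (\<psi> w) = w" using hom w(1) unfolding homeomorphism_def by blast
      then show ?thesis using f(6)[OF w(1)] w(2) by simp
    qed
    ultimately have cT: "continuous_on T X" using continuous_on_cong by fastforce
    obtain Ob where O: "open Ob" "T = M \<inter> Ob" using f(4) T_def unfolding openin_open by blast
    have pT: "p \<in> T" using f(2) T_def by simp
    have "continuous (at p within T) X" using cT pT continuous_on_eq_continuous_within by blast
    moreover have "at p within T = at p within M"
      by (rule at_within_nhd[of p Ob]) (use O pT in auto)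
    ultimately show ?thesis by simp
  qed
  then show ?thesis using continuous_on_eq_continuous_within by blast
qed

lemma chart_ball:
  assumes "local_param M X p W \<psi> F"
  obtains w1 \<rho> where "\<rho> > 0" "ball w1 \<rho> \<subseteq> W \<inter> halfplane"
proof -
  note f = lp_facts[OF assms]
  obtain w0 where w0: "w0 \<in> W \<inter> halfplane" using f(2) by blast
  obtain r where r: "r > 0" "ball w0 r \<subseteq> W" using f(1) w0 open_contains_ball by blast
  define w1 where "w1 = (fst w0, snd w0 + r/2)"
  have dw: "dist w1 w0 = r/2" using r(1) by (cases w0) (simp add: w1_def dist_Pair_Pair dist_real_def)
  have "ball w1 (r/2) \<subseteq> W \<inter> halfplane"
  proof
    fix z assume z: "z \<in> ball w1 (r/2)"
    have "dist z w0 \<le> dist z w1 + dist w1 w0" by (rule dist_triangle)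
    then have "dist z w0 < r" using z dw by (simp add: dist_commute)
    then have "z \<in> W" using r by (auto simp: dist_commute)
    moreover have "\<bar>snd z - snd w1\<bar> \<le> dist z w1" using dist_snd_le[of z w1] by (simp add: dist_real_def)
    then have "snd z > snd w0" using z w1_def by (auto simp: dist_commute)
    then have "snd z \<ge> 0" using w0 by (simp add: halfplane_def)
    ultimately show "z \<in> W \<inter> halfplane" by (simp add: halfplane_def)
  qed
  then show ?thesis using that[of "r/2" w1] r by simp
qed

lemma not_const_ball:
  assumes lp: "local_param M X p W \<psi> F" and \<rho>: "\<rho> > 0" "ball w1 \<rho> \<subseteq> W \<inter> halfplane"
    and c: "\<And>z. z \<in> ball w1 \<rho> \<Longrightarrow> F z = K"
  shows False
proof -
  note f = lp_facts[OF lp]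
  have w1W: "w1 \<in> W" using \<rho> by auto
  have "iterpd [False] F w1 = 0"
    by (rule deriv_const_zero[OF F_frechet[OF f(5,1) w1W] open_ball _ c]) (use \<rho> in auto)
  then show False using f(7)[OF w1W] unfolding Cx_def by simp
qed

lemma k0_and_interior:
  assumes fb: "free_boundary_solution M X" and un: "unit_normal M X \<nu>"
    and cn: "\<And>q. q \<in> M \<Longrightarrow> \<nu> q = n0" and ck: "\<And>q. q \<in> M \<Longrightarrow> X q \<bullet> n0 = k0"
    and n1: "norm n0 = 1"
  shows "\<bar>k0\<bar> < 1" "\<exists>p\<in>M. norm (X p) < 1"
proof -
  obtain p0 where p0: "p0 \<in> M" using fb unfolding free_boundary_solution_def immersed_surface_def by blast
  obtain W \<psi> F where lp: "local_param M X p0 W \<psi> F"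
    using fb p0 unfolding free_boundary_solution_def immersed_surface_def by blast
  note f = lp_facts[OF lp]
  obtain w1 \<rho> where \<rho>: "\<rho> > 0" "ball w1 \<rho> \<subseteq> W \<inter> halfplane" using chart_ball[OF lp] by blast
  have nX: "norm (X q) \<le> 1" if "q \<in> M" for q using fb that unfolding free_boundary_solution_def by blast
  show k: "\<bar>k0\<bar> < 1"
  proof (rule ccontr)
    assume "\<not> \<bar>k0\<bar> < 1"
    then have a1: "1 \<le> \<bar>k0\<bar>" by linarith
    then have "1*1 \<le> \<bar>k0\<bar> * \<bar>k0\<bar>" by (intro mult_mono) auto
    then have k1: "k0^2 \<ge> 1" by (simp add: power2_eq_square)
    have "X q = k0 *\<^sub>R n0" if "q \<in> M" for q
    proof -
      have "(X q - k0 *\<^sub>R n0) \<bullet> (X q - k0 *\<^sub>R n0) = X q \<bullet> X q - 2 * k0 * (X q \<bullet> n0) + k0^2 * (n0 \<bullet> n0)"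
        by (simp add: inner_diff_left inner_diff_right inner_commute power2_eq_square algebra_simps)
      also have "\<dots> = (norm (X q))^2 - k0^2" using ck[OF that] n1 by (simp add: power2_norm_eq_inner[symmetric] norm_eq_1 power2_eq_square)
      also have "\<dots> \<le> 0" using nX[OF that] k1 by (smt (verit) norm_ge_zero power_mono one_power2)
      finally have "(X q - k0 *\<^sub>R n0) \<bullet> (X q - k0 *\<^sub>R n0) = 0" by (meson inner_ge_zero order_antisym)
      then show ?thesis by simp
    qed
    then have "F z = k0 *\<^sub>R n0" if "z \<in> ball w1 \<rho>" for z
      using f(6,8) \<rho>(2) that by (metis subsetD)
    then show False using not_const_ball[OF lp \<rho>] by blast
  qed
  show "\<exists>p\<in>M. norm (X p) < 1"
  proof (rule ccontr)
    assume "\<not> (\<exists>p\<in>M. norm (X p) < 1)"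
    then have one: "norm (X q) = 1" if "q \<in> M" for q using nX that by force
    have w1W: "w1 \<in> W" and w1WH: "w1 \<in> W \<inter> halfplane" using \<rho> by auto
    have FF: "F z \<bullet> F z = 1" if "z \<in> ball w1 \<rho>" for z
    proof -
      have zz: "z \<in> W \<inter> halfplane" using that \<rho> by auto
      show ?thesis using one[OF f(8)[OF zz]] f(6)[OF zz] by (simp add: norm_eq_1)
    qed
    define u where "u = iterpd [False] F w1"
    define v where "v = iterpd [True] F w1"
    have dF: "(F has_derivative (\<lambda>h. fst h *\<^sub>R u + snd h *\<^sub>R v)) (at w1)"
      using F_frechet[OF f(5,1) w1W] unfolding u_def v_def .
    have dFF: "((\<lambda>z. F z \<bullet> F z) has_derivative (\<lambda>h. F w1 \<bullet> (fst h *\<^sub>R u + snd h *\<^sub>R v) + (fst h *\<^sub>R u + snd h *\<^sub>R v) \<bullet> F w1)) (at w1)"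
      by (rule has_derivative_inner[OF dF dF])
    have d0: "((\<lambda>z. F z \<bullet> F z) has_derivative (\<lambda>h. 0)) (at w1)"
      by (rule has_derivative_transform_within_open[of "\<lambda>z. 1" _ _ _ "ball w1 \<rho>"]) (use \<rho> FF in auto)
    have eqd: "(\<lambda>h. F w1 \<bullet> (fst h *\<^sub>R u + snd h *\<^sub>R v) + (fst h *\<^sub>R u + snd h *\<^sub>R v) \<bullet> F w1) = (\<lambda>h. 0)"
      by (rule has_derivative_unique[OF dFF d0])
    have Fu: "F w1 \<bullet> u = 0" using fun_cong[OF eqd, of "(1,0)"] by (simp add: inner_commute)
    have Fv: "F w1 \<bullet> v = 0" using fun_cong[OF eqd, of "(0,1)"] by (simp add: inner_commute)
    have \<nu>w: "\<nu> (\<psi> w1) = n0" using cn f(8)[OF w1WH] by simp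
    have nu: "n0 \<bullet> u = 0" "n0 \<bullet> v = 0" using nu_facts(1,2)[OF un lp w1WH] \<nu>w u_def v_def by auto
    define C where "C = cross3 u v"
    define cc where "cc = C \<bullet> C"
    have Cn: "C \<noteq> 0" using f(7)[OF w1W] unfolding C_def Cx_def u_def v_def .
    have ccp: "cc > 0" using Cn by (simp add: cc_def)
    have pF: "cc *\<^sub>R F w1 = (F w1 \<bullet> C) *\<^sub>R C" using perp_parallel[OF Fu Fv] unfolding cc_def C_def .
    have pn: "cc *\<^sub>R n0 = (n0 \<bullet> C) *\<^sub>R C" using perp_parallel[OF nu] unfolding cc_def C_def .
    have F1: "F w1 \<bullet> F w1 = 1" using FF \<rho> by simp
    have nn: "n0 \<bullet> n0 = 1" using n1 by (simp add: norm_eq_1)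
    have a2: "(F w1 \<bullet> C)^2 = cc"
    proof -
      have "cc * cc * (F w1 \<bullet> F w1) = (cc *\<^sub>R F w1) \<bullet> (cc *\<^sub>R F w1)" by simp
      also have "\<dots> = (F w1 \<bullet> C)^2 * cc" unfolding pF by (simp add: power2_eq_square cc_def)
      finally show ?thesis using F1 ccp by (simp add: power2_eq_square)
    qed
    have b2: "(n0 \<bullet> C)^2 = cc"
    proof -
      have "cc * cc * (n0 \<bullet> n0) = (cc *\<^sub>R n0) \<bullet> (cc *\<^sub>R n0)" by simp
      also have "\<dots> = (n0 \<bullet> C)^2 * cc" unfolding pn by (simp add: power2_eq_square cc_def)
      finally show ?thesis using nn ccp by (simp add: power2_eq_square)
    qed
    have "cc * cc * (F w1 \<bullet> n0) = (cc *\<^sub>R F w1) \<bullet> (cc *\<^sub>R n0)" by simp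
    also have "\<dots> = (F w1 \<bullet> C) * (n0 \<bullet> C) * cc" unfolding pF pn by (simp add: cc_def)
    finally have "cc * (F w1 \<bullet> n0) = (F w1 \<bullet> C) * (n0 \<bullet> C)" using ccp by (simp add: mult.assoc)
    then have "cc^2 * (F w1 \<bullet> n0)^2 = cc * cc" using a2 b2 by (metis power_mult_distrib)
    then have "(F w1 \<bullet> n0)^2 = 1" using ccp by (simp add: power2_eq_square)
    moreover have "F w1 \<bullet> n0 = k0" using ck[OF f(8)[OF w1WH]] f(6)[OF w1WH] by simp
    ultimately show False using k by (metis abs_le_square_iff abs_one less_irrefl one_power2 power2_abs order.strict_iff_not)
  qed
qed



lemma planar_disk:
  assumes fb: "free_boundary_solution M X" and un: "unit_normal M X \<nu>"
    and cn: "\<And>q. q \<in> M \<Longrightarrow> \<nu> q = n0" and ck: "\<And>q. q \<in> M \<Longrightarrow> X q \<bullet> n0 = k0"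
    and n1: "norm n0 = 1"
  shows "plane_disk M X"
proof -
  have k: "\<bar>k0\<bar> < 1" and ex: "\<exists>p\<in>M. norm (X p) < 1" using k0_and_interior[OF fb un cn ck n1] by auto
  have nX: "norm (X q) \<le> 1" if "q \<in> M" for q using fb that unfolding free_boundary_solution_def by blast
  have cpt: "compact M" using fb unfolding free_boundary_solution_def immersed_surface_def by blast
  have clo: "closed (X ` M)" by (rule compact_imp_closed[OF compact_continuous_image[OF X_cont[OF fb] cpt]])
  define D where "D = {x. norm x < 1 \<and> n0 \<bullet> x = k0}"
  have Deq: "D = ball 0 1 \<inter> {x. n0 \<bullet> x = k0}" unfolding D_def by auto
  have cD: "connected D" unfolding Deq by (intro convex_connected convex_Int convex_ball convex_hyperplane)
  define S where "S = D \<inter> X ` M"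
  have oS: "openin (top_of_set D) S"
    unfolding openin_euclidean_subtopology_iff
  proof (intro conjI ballI)
    show "S \<subseteq> D" unfolding S_def by blast
    fix y assume "y \<in> S"
    then obtain p where p: "p \<in> M" "y = X p" "norm (X p) < 1" unfolding S_def D_def by blast
    obtain e where e: "e > 0" "\<forall>y. n0 \<bullet> y = k0 \<and> dist y (X p) < e \<longrightarrow> y \<in> X ` M"
      using interior_open[OF fb un cn ck p(1,3)] by blast
    show "\<exists>e>0. \<forall>x'\<in>D. dist x' y < e \<longrightarrow> x' \<in> S"
      using e p(2) unfolding S_def D_def by blast
  qed
  have cS: "closedin (top_of_set D) S" unfolding S_def by (rule closedin_closed_Int[OF clo])
  obtain p where p: "p \<in> M" "norm (X p) < 1" using ex by blast
  have "X p \<in> S" unfolding S_def D_def using p ck[OF p(1)] by (auto simp: inner_commute)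
  then have SD: "S = D" using cD oS cS unfolding connected_clopen by blast
  have "{x. norm x \<le> 1 \<and> n0 \<bullet> x = k0} \<subseteq> X ` M"
  proof
    fix x assume x: "x \<in> {x. norm x \<le> 1 \<and> n0 \<bullet> x = k0}"
    have "\<forall>e>0. \<exists>y\<in>X ` M. dist y x < e"
    proof (intro allI impI)
      fix e :: real assume e: "e > 0"
      define t where "t = min 1 (e/3)"
      have t: "t > 0" "t \<le> 1" "t \<le> e/3" using e by (auto simp: t_def)
      define y where "y = (1 - t) *\<^sub>R x + t *\<^sub>R (k0 *\<^sub>R n0)"
      have "norm y \<le> (1 - t) * norm x + t * \<bar>k0\<bar>"
      proof -
        have "norm y \<le> norm ((1 - t) *\<^sub>R x) + norm (t *\<^sub>R (k0 *\<^sub>R n0))" unfolding y_def by (rule norm_triangle_ineq)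
        also have "norm ((1 - t) *\<^sub>R x) = (1 - t) * norm x" using t by simp
        also have "norm (t *\<^sub>R (k0 *\<^sub>R n0)) = t * \<bar>k0\<bar>" using t n1 by (simp add: abs_mult)
        finally show ?thesis .
      qed
      also have "\<dots> \<le> (1 - t) + t * \<bar>k0\<bar>" using x t by (simp add: mult_left_le)
      also have "\<dots> < 1" proof - have "t * \<bar>k0\<bar> < t * 1" using t k by (intro mult_strict_left_mono) auto then show ?thesis by simp qed
      finally have "norm y < 1" .
      moreover have "n0 \<bullet> y = k0" using x n1 unfolding y_def by (simp add: inner_add_right norm_eq_1 algebra_simps)
      ultimately have "y \<in> D" unfolding D_def by simp
      then have "y \<in> X ` M" using SD S_def by blast
      moreover have "dist y x < e"
      proof -
        have "y - x = t *\<^sub>R (k0 *\<^sub>R n0 - x)" unfolding y_def by (simp add: algebra_simps)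
        then have "dist y x = t * norm (k0 *\<^sub>R n0 - x)" using t by (simp add: dist_norm)
        also have "\<dots> \<le> t * (\<bar>k0\<bar> + norm x)" using t n1
          by (intro mult_left_mono) (auto intro: order_trans[OF norm_triangle_ineq4])
        also have "\<dots> \<le> t * 2" using t k x by (intro mult_left_mono) auto
        also have "\<dots> < e" using t e by linarith
        finally show ?thesis .
      qed
      ultimately show "\<exists>y\<in>X ` M. dist y x < e" by blast
    qed
    then show "x \<in> X ` M" using closed_approachable[OF clo] by blast
  qed
  moreover have "X ` M \<subseteq> {x. norm x \<le> 1 \<and> n0 \<bullet> x = k0}" using nX ck by (auto simp: inner_commute)
  ultimately have "X ` M = {x. norm x \<le> 1 \<and> n0 \<bullet> x = k0}" by blast
  moreover have "n0 \<noteq> 0" using n1 by auto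
  ultimately show ?thesis unfolding plane_disk_def by blast
qed

lemma core:
  assumes fb: "free_boundary_solution M X" and un: "unit_normal M X \<nu>" and np: "\<not> plane_disk M X"
    and rel: "\<And>q. q \<in> M \<Longrightarrow> a \<bullet> \<nu> q + c * (X q \<bullet> \<nu> q) = 0"
  shows "a = 0 \<and> c = 0"
proof (rule ccontr)
  assume "\<not> (a = 0 \<and> c = 0)"
  then have nz: "a \<noteq> 0 \<or> c \<noteq> 0" by blast
  obtain p0 where p0: "p0 \<in> M" using fb unfolding free_boundary_solution_def immersed_surface_def by blast
  have cn: "\<nu> q = \<nu> p0" and ck: "X q \<bullet> \<nu> p0 = X p0 \<bullet> \<nu> p0" if "q \<in> M" for q
    using global_const[OF fb un rel nz p0 that] by auto
  have n1: "norm (\<nu> p0) = 1" using un p0 unfolding unit_normal_def by blast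
  have "plane_disk M X" by (rule planar_disk[OF fb un cn ck n1])
  then show False using np by blast
qed



lemma core4:
  fixes M :: "'a::t2_space set" and X \<nu> :: "'a \<Rightarrow> real^3"
  assumes fb: "free_boundary_solution M X" and un: "unit_normal M X \<nu>" and np: "\<not> plane_disk M X"
    and rel: "\<And>q. q \<in> M \<Longrightarrow> a1 * (\<nu> q $ 1) + a2 * (\<nu> q $ 2) + a3 * (\<nu> q $ 3) + a4 * (X q \<bullet> \<nu> q) = 0"
  shows "a1 = 0 \<and> a2 = 0 \<and> a3 = 0 \<and> a4 = 0"
proof -
  define a :: "real^3" where "a = vector [a1, a2, a3]"
  have "a \<bullet> \<nu> q + a4 * (X q \<bullet> \<nu> q) = 0" if "q \<in> M" for q
    using rel[OF that] unfolding a_def by (simp add: inner_vec_def sum_3 vector_3)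
  then have "a = 0 \<and> a4 = 0" using core[OF fb un np] by blast
  then show ?thesis unfolding a_def by (simp add: vec_eq_iff forall_3 vector_3)
qed

theorem lemma6p4:
  fixes M :: "'a::t2_space set" and X \<nu> :: "'a \<Rightarrow> real^3"
  assumes "free_boundary_solution M X"
    and "unit_normal M X \<nu>"
    and "\<not> plane_disk M X"
  shows "vector_space.dim (\<lambda>(c::real) (f::'a \<Rightarrow> real). \<lambda>p. c * f p)
           {fun_on M (\<lambda>p. \<nu> p $ 1), fun_on M (\<lambda>p. \<nu> p $ 2), fun_on M (\<lambda>p. \<nu> p $ 3),
            fun_on M (\<lambda>p. X p \<bullet> \<nu> p)} = 4"
proof -
  interpret V: vector_space "\<lambda>(c::real) (f::'a \<Rightarrow> real). \<lambda>p. c * f p"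
    by unfold_locales (auto simp: fun_eq_iff algebra_simps plus_fun_def)
  define f1 where "f1 = fun_on M (\<lambda>p. \<nu> p $ 1)"
  define f2 where "f2 = fun_on M (\<lambda>p. \<nu> p $ 2)"
  define f3 where "f3 = fun_on M (\<lambda>p. \<nu> p $ 3)"
  define f4 where "f4 = fun_on M (\<lambda>p. X p \<bullet> \<nu> p)"
  note c4 = core4[OF assms]
  have ev: "f1 q = \<nu> q $ 1" "f2 q = \<nu> q $ 2" "f3 q = \<nu> q $ 3" "f4 q = X q \<bullet> \<nu> q" if "q \<in> M" for q
    using that unfolding f1_def f2_def f3_def f4_def fun_on_def by auto
  have lin: "b1 = 0 \<and> b2 = 0 \<and> b3 = 0 \<and> b4 = 0"
    if "\<And>q. q \<in> M \<Longrightarrow> b1 * f1 q + b2 * f2 q + b3 * f3 q + b4 * f4 q = 0" for b1 b2 b3 b4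
    using c4[of b1 b2 b3 b4] that ev by simp
  have d12: "f1 \<noteq> f2" using lin[of 1 "-1" 0 0] by force
  have d13: "f1 \<noteq> f3" using lin[of 1 0 "-1" 0] by force
  have d14: "f1 \<noteq> f4" using lin[of 1 0 0 "-1"] by force
  have d23: "f2 \<noteq> f3" using lin[of 0 1 "-1" 0] by force
  have d24: "f2 \<noteq> f4" using lin[of 0 1 0 "-1"] by force
  have d34: "f3 \<noteq> f4" using lin[of 0 0 1 "-1"] by force
  have card: "card {f1, f2, f3, f4} = 4" using d12 d13 d14 d23 d24 d34 by simp
  have ind: "V.independent {f1, f2, f3, f4}"
  proof
    assume "V.dependent {f1, f2, f3, f4}"
    then obtain u where u: "\<exists>v\<in>{f1, f2, f3, f4}. u v \<noteq> 0"
      "(\<Sum>v\<in>{f1, f2, f3, f4}. (\<lambda>p. u v * v p)) = 0"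
      using V.dependent_finite[of "{f1, f2, f3, f4}"] by auto
    have "(\<lambda>p. u f1 * f1 p) + ((\<lambda>p. u f2 * f2 p) + ((\<lambda>p. u f3 * f3 p) + (\<lambda>p. u f4 * f4 p))) = 0"
      using u(2) d12 d13 d14 d23 d24 d34 by simp
    then have "u f1 * f1 q + u f2 * f2 q + u f3 * f3 q + u f4 * f4 q = 0" for q
      by (drule_tac fun_cong[of _ _ q]) (simp add: plus_fun_def add.assoc)
    then have "u f1 = 0 \<and> u f2 = 0 \<and> u f3 = 0 \<and> u f4 = 0" using lin by blast
    then show False using u(1) by auto
  qed
  show ?thesis
    using V.dim_eq_card_independent[OF ind] card unfolding f1_def f2_def f3_def f4_def by simp
qed

end
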